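(* Let $G$ be a maximal $3$-$\gamma_{c}$-vertex critical graph with independence number $\alpha$ and connectivity $\kappa$. Then $\alpha\leq\kappa$.
   Context: All graphs are finite, simple and connected. The connectivity $\kappa(G)$ is the minimum cardinality of a vertex set whose removal disconnects $G$. A set $D\subseteq V(G)$ is a connected dominating set of $G$ if every vertex of $G$ is in $D$ or adjacent to a vertex of $D$, and $G[D]$ is connected; $\gamma_{c}(G)$ is the minimum cardinality of such a set. $G$ is $k$-$\gamma_{c}$-edge critical if $\gamma_{c}(G)=k$ and $\gamma_{c}(G+uv)<k$ for every pair of non-adjacent vertices $u,v$. A $2$-connected graph $G$ is $k$-$\gamma_{c}$-vertex critical if $\gamma_{c}(G)=k$ and $\gamma_{c}(G-v)<k$ for every $v\in V(G)$. $G$ is maximal $k$-$\gamma_{c}$-vertex critical if it is both $k$-$\gamma_{c}$-edge critical and $k$-$\gamma_{c}$-vertex critical. *)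

theory Defs
  imports Main
begin

definition simple_graph :: "'a set \<Rightarrow> ('a \<Rightarrow> 'a \<Rightarrow> bool) \<Rightarrow> bool" where
  "simple_graph V E \<longleftrightarrow> finite V \<and> V \<noteq> {} \<and>
     (\<forall>u v. E u v \<longrightarrow> u \<in> V \<and> v \<in> V) \<and>
     (\<forall>u v. E u v \<longrightarrow> E v u) \<and> (\<forall>v. \<not> E v v)"

inductive reach_in :: "'a set \<Rightarrow> ('a \<Rightarrow> 'a \<Rightarrow> bool) \<Rightarrow> 'a \<Rightarrow> 'a \<Rightarrow> bool"
  for S E where
  refl: "v \<in> S \<Longrightarrow> reach_in S E v v"
| step: "reach_in S E u v \<Longrightarrow> E v w \<Longrightarrow> w \<in> S \<Longrightarrow> reach_in S E u w"

definition connected_in :: "'a set \<Rightarrow> ('a \<Rightarrow> 'a \<Rightarrow> bool) \<Rightarrow> bool" where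
  "connected_in S E \<longleftrightarrow> S \<noteq> {} \<and> (\<forall>u\<in>S. \<forall>v\<in>S. reach_in S E u v)"

definition separating_set :: "'a set \<Rightarrow> ('a \<Rightarrow> 'a \<Rightarrow> bool) \<Rightarrow> 'a set \<Rightarrow> bool" where
  "separating_set V E S \<longleftrightarrow> S \<subseteq> V \<and> V - S \<noteq> {} \<and> \<not> connected_in (V - S) E"

text \<open>Connectivity: minimum size of a separating set; for complete graphs
  (no separating set exists) the standard convention kappa(K_n) = n - 1.\<close>
definition connectivity :: "'a set \<Rightarrow> ('a \<Rightarrow> 'a \<Rightarrow> bool) \<Rightarrow> nat" where
  "connectivity V E =
     (if \<exists>S. separating_set V E S
      then (LEAST k. \<exists>S. separating_set V E S \<and> card S = k)
      else card V - 1)"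

definition independent_set :: "'a set \<Rightarrow> ('a \<Rightarrow> 'a \<Rightarrow> bool) \<Rightarrow> 'a set \<Rightarrow> bool" where
  "independent_set V E I \<longleftrightarrow> I \<subseteq> V \<and> (\<forall>u\<in>I. \<forall>v\<in>I. \<not> E u v)"

definition independence_number :: "'a set \<Rightarrow> ('a \<Rightarrow> 'a \<Rightarrow> bool) \<Rightarrow> nat" where
  "independence_number V E = Max {card I | I. independent_set V E I}"

definition connected_dominating_set :: "'a set \<Rightarrow> ('a \<Rightarrow> 'a \<Rightarrow> bool) \<Rightarrow> 'a set \<Rightarrow> bool" where
  "connected_dominating_set V E D \<longleftrightarrow> D \<subseteq> V \<and>
     (\<forall>v\<in>V. v \<in> D \<or> (\<exists>d\<in>D. E v d)) \<and> connected_in D E"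

definition gamma_c :: "'a set \<Rightarrow> ('a \<Rightarrow> 'a \<Rightarrow> bool) \<Rightarrow> nat" where
  "gamma_c V E = (LEAST k. \<exists>D. connected_dominating_set V E D \<and> card D = k)"

definition add_edge :: "('a \<Rightarrow> 'a \<Rightarrow> bool) \<Rightarrow> 'a \<Rightarrow> 'a \<Rightarrow> 'a \<Rightarrow> 'a \<Rightarrow> bool" where
  "add_edge E u v = (\<lambda>x y. E x y \<or> (x = u \<and> y = v) \<or> (x = v \<and> y = u))"

definition del_vertex :: "('a \<Rightarrow> 'a \<Rightarrow> bool) \<Rightarrow> 'a \<Rightarrow> 'a \<Rightarrow> 'a \<Rightarrow> bool" where
  "del_vertex E w = (\<lambda>x y. E x y \<and> x \<noteq> w \<and> y \<noteq> w)"

definition edge_critical :: "nat \<Rightarrow> 'a set \<Rightarrow> ('a \<Rightarrow> 'a \<Rightarrow> bool) \<Rightarrow> bool" where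
  "edge_critical k V E \<longleftrightarrow> gamma_c V E = k \<and>
     (\<forall>u\<in>V. \<forall>v\<in>V. u \<noteq> v \<and> \<not> E u v \<longrightarrow> gamma_c V (add_edge E u v) < k)"

definition vertex_critical :: "nat \<Rightarrow> 'a set \<Rightarrow> ('a \<Rightarrow> 'a \<Rightarrow> bool) \<Rightarrow> bool" where
  "vertex_critical k V E \<longleftrightarrow> connectivity V E \<ge> 2 \<and> gamma_c V E = k \<and>
     (\<forall>v\<in>V. gamma_c (V - {v}) (del_vertex E v) < k)"

definition maximal_vertex_critical :: "nat \<Rightarrow> 'a set \<Rightarrow> ('a \<Rightarrow> 'a \<Rightarrow> bool) \<Rightarrow> bool" where
  "maximal_vertex_critical k V E \<longleftrightarrow> edge_critical k V E \<and> vertex_critical k V E"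

end

theory Submission
  imports Defs
begin

lemma reach_in_mem: "reach_in A F u v \<Longrightarrow> u \<in> A \<and> v \<in> A"
proof (induction rule: reach_in.induct)
  case (refl v)
  then show ?case by simp
next
  case (step u v w)
  then show ?case by simp
qed

lemma reach_in_trans: "reach_in A F v w \<Longrightarrow> reach_in A F u v \<Longrightarrow> reach_in A F u w"
proof (induction rule: reach_in.induct)
  case (refl v)
  then show ?case by simp
next
  case (step v' w' x)
  then show ?case using reach_in.step by metis
qed

lemma reach_in_edge: "u \<in> A \<Longrightarrow> w \<in> A \<Longrightarrow> F u w \<Longrightarrow> reach_in A F u w"
  using reach_in.refl reach_in.step by metis

lemma reach_in_sym:
  assumes "reach_in A F u v" and "\<And>x y. F x y \<Longrightarrow> F y x"
  shows "reach_in A F v u"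
  using assms(1)
proof (induction rule: reach_in.induct)
  case (refl v)
  then show ?case by (rule reach_in.refl)
next
  case (step u v w)
  have vA: "v \<in> A" using reach_in_mem[OF step.hyps(1)] by (rule conjunct2)
  have Fwv: "F w v" using assms(2)[OF step.hyps(2)] .
  have "reach_in A F w v" using reach_in_edge[of w A v F] step.hyps(3) vA Fwv by blast
  then show ?case using reach_in_trans[OF step.IH] by simp
qed

lemma reach_in_mono:
  assumes "reach_in A E u v" and "\<And>x y. x \<in> A \<Longrightarrow> y \<in> A \<Longrightarrow> E x y \<Longrightarrow> F x y"
  shows "reach_in A F u v"
  using assms(1)
proof (induction rule: reach_in.induct)
  case (refl v)
  then show ?case by (rule reach_in.refl)
next
  case (step u v w)
  have vA: "v \<in> A" using reach_in_mem[OF step.hyps(1)] by (rule conjunct2)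
  have "F v w" using assms(2)[OF vA step.hyps(3) step.hyps(2)] .
  then show ?case using reach_in.step[OF step.IH _ step.hyps(3)] by simp
qed

lemma connected_from:
  assumes "p \<in> A" "\<And>y. y \<in> A \<Longrightarrow> reach_in A F p y" "\<And>x y. F x y \<Longrightarrow> F y x"
  shows "connected_in A F"
  unfolding connected_in_def
proof (intro conjI ballI)
  show "A \<noteq> {}" using assms(1) by blast
  fix u v assume u: "u \<in> A" and v: "v \<in> A"
  have "reach_in A F u p" using reach_in_sym[OF assms(2)[OF u] assms(3)] by simp
  then show "reach_in A F u v" using reach_in_trans[OF assms(2)[OF v]] by simp
qed

lemma reach2:
  assumes "reach_in S F u w" "S = {p, q}" "u = p"
  shows "w = p \<or> F p q \<or> F q p"
  using assms
proof (induction rule: reach_in.induct)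
  case (refl v)
  then show ?case by simp
next
  case (step u v w)
  then have "v = p \<or> F p q \<or> F q p" by simp
  moreover have "w = p \<or> w = q" using step.hyps(3) step.prems(1) by simp
  ultimately show ?case using step.hyps(2) by blast
qed

lemma cds_pair:
  assumes "connected_dominating_set A F D" "finite A" "card D < 3"
    and sym: "\<And>x y. F x y \<Longrightarrow> F y x"
  shows "\<exists>p q. D = {p, q} \<and> (p = q \<or> F p q)"
proof -
  have DA: "D \<subseteq> A" using assms(1) unfolding connected_dominating_set_def by (rule conjunct1)
  have cD: "connected_in D F" using assms(1) unfolding connected_dominating_set_def by (simp only: conj_assoc)
  have ne: "D \<noteq> {}" using cD unfolding connected_in_def by (rule conjunct1)
  have fD: "finite D" using DA assms(2) by (rule finite_subset)
  have "card D \<noteq> 0" using fD ne by simp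
  then have "card D = 1 \<or> card D = 2" using assms(3) by linarith
  then show ?thesis
  proof
    assume "card D = 1"
    then obtain p where "D = {p}" by (rule card_1_singletonE)
    then show ?thesis by simp
  next
    assume c2: "card D = 2"
    obtain p q where pq: "D = {p, q}" "p \<noteq> q" using c2 unfolding card_2_iff by blast
    have pD: "p \<in> D" and qD: "q \<in> D" using pq(1) by simp_all
    have "reach_in D F p q" using cD pD qD unfolding connected_in_def by blast
    then have "q = p \<or> F p q \<or> F q p" using reach2[of D F p q p q] pq(1) by simp
    then have "F p q" using pq(2) sym by blast
    then show ?thesis using pq(1) by blast
  qed
qed

lemma pair_connected:
  assumes "p \<in> A" "q \<in> A" "p = q \<or> (F p q \<and> F q p)"
  shows "connected_in {p, q} F"
  unfolding connected_in_def
proof (intro conjI ballI)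
  show "{p, q} \<noteq> {}" by simp
  fix u v assume u: "u \<in> {p, q}" and v: "v \<in> {p, q}"
  show "reach_in {p, q} F u v"
  proof (cases "u = v")
    case True
    then show ?thesis using u reach_in.refl by metis
  next
    case False
    then have "F u v" using u v assms(3) by blast
    then show ?thesis using reach_in_edge[of u "{p, q}" v F] u v by blast
  qed
qed

lemma gc_le: "connected_dominating_set A F D \<Longrightarrow> gamma_c A F \<le> card D"
  unfolding gamma_c_def by (rule Least_le) blast

lemma gc_ex: "connected_dominating_set A F D \<Longrightarrow> \<exists>D'. connected_dominating_set A F D' \<and> card D' = gamma_c A F"
  unfolding gamma_c_def by (rule LeastI_ex) blast

definition arr :: "'a set \<Rightarrow> ('a \<Rightarrow> 'a \<Rightarrow> bool) \<Rightarrow> 'a \<Rightarrow> 'a \<Rightarrow> bool" where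
  "arr V E a b \<longleftrightarrow> (\<exists>x\<in>V. E a x \<and> \<not> E x b \<and> x \<noteq> b \<and>
      (\<forall>y\<in>V. y \<noteq> b \<longrightarrow> y = a \<or> E y a \<or> y = x \<or> E y x))"

locale mvc =
  fixes V :: "'a set" and E :: "'a \<Rightarrow> 'a \<Rightarrow> bool"
  assumes fin: "finite V"
    and inV: "\<And>u v. E u v \<Longrightarrow> u \<in> V \<and> v \<in> V"
    and sym: "\<And>u v. E u v \<Longrightarrow> E v u"
    and irr: "\<And>v. \<not> E v v"
    and nodomv: "\<And>d. d \<in> V \<Longrightarrow> \<exists>y\<in>V. y \<noteq> d \<and> \<not> E y d"
    and ec: "\<And>a b. a \<in> V \<Longrightarrow> b \<in> V \<Longrightarrow> a \<noteq> b \<Longrightarrow> \<not> E a b \<Longrightarrow>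
        (\<forall>y\<in>V. y = a \<or> y = b \<or> E y a \<or> E y b) \<or> arr V E a b \<or> arr V E b a"
    and vc: "\<And>u. u \<in> V \<Longrightarrow> \<exists>p\<in>V. \<exists>q\<in>V. p \<noteq> u \<and> q \<noteq> u \<and> (p = q \<or> E p q) \<and>
        \<not> E p u \<and> \<not> E q u \<and> (\<forall>y\<in>V. y \<noteq> u \<longrightarrow> y = p \<or> E y p \<or> y = q \<or> E y q)"
    and sepcard: "\<And>S. separating_set V E S \<Longrightarrow> 2 \<le> card S"
begin

lemma AL:
  assumes "a \<in> V" "b \<in> V" "a \<noteq> b" "\<not> E a b" "z \<in> V" "z \<noteq> a" "z \<noteq> b" "\<not> E z a" "\<not> E z b"
  shows "arr V E a b \<or> arr V E b a"
  using ec[OF assms(1-4)] assms(5-9) by blast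

lemma wit:
  assumes "arr V E a b" "independent_set V E I" "a \<in> I" "b \<in> I" "a \<noteq> b"
  obtains x where "x \<in> V" "E a x" "\<not> E x b" "x \<noteq> b" "x \<notin> I"
    "\<forall>i\<in>I. i \<noteq> b \<longrightarrow> E x i"
    "\<forall>y\<in>V. y \<noteq> b \<longrightarrow> y = a \<or> E y a \<or> y = x \<or> E y x"
proof -
  obtain x where x: "x \<in> V" "E a x" "\<not> E x b" "x \<noteq> b"
    and dom: "\<forall>y\<in>V. y \<noteq> b \<longrightarrow> y = a \<or> E y a \<or> y = x \<or> E y x"
    using assms(1) unfolding arr_def by blast
  have IV: "I \<subseteq> V" and ind: "\<forall>u\<in>I. \<forall>v\<in>I. \<not> E u v"
    using assms(2) unfolding independent_set_def by auto
  have xI: "x \<notin> I" using x(2) ind assms(3) by blast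
  have "\<forall>i\<in>I. i \<noteq> b \<longrightarrow> E x i"
  proof (intro ballI impI)
    fix i assume i: "i \<in> I" "i \<noteq> b"
    show "E x i"
    proof (cases "i = a")
      case True
      then show ?thesis using x(2) sym by blast
    next
      case False
      have "i \<in> V" using i IV by blast
      then have "i = a \<or> E i a \<or> i = x \<or> E i x" using dom i by blast
      then show ?thesis using False ind i assms(3) xI sym by blast
    qed
  qed
  then show ?thesis using that x xI dom by blast
qed

lemma sing:
  assumes AV: "A \<subseteq> V" and nc: "\<not> connected_in A E" and p: "p \<in> A" and q: "q \<in> A"
    and pq: "p = q \<or> E p q"
    and dom: "\<forall>y\<in>A. y \<noteq> c \<longrightarrow> y = p \<or> E y p \<or> y = q \<or> E y q"
  shows "c \<in> A \<and> (\<forall>y\<in>A. \<not> E c y)"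
proof -
  have rq: "reach_in A E p q"
  proof (cases "p = q")
    case True
    then show ?thesis using p reach_in.refl by metis
  next
    case False
    then have "E p q" using pq by simp
    then show ?thesis using reach_in_edge[of p A q E] p q by simp
  qed
  have R: "reach_in A E p y" if y: "y \<in> A" "y \<noteq> c" for y
  proof -
    have "y = p \<or> E y p \<or> y = q \<or> E y q" using dom y by simp
    then show "reach_in A E p y"
    proof (elim disjE)
      assume "y = p" then show ?thesis using p reach_in.refl by metis
    next
      assume "E y p" then have "E p y" by (rule sym)
      then show ?thesis using reach_in_edge[of p A y E] p y(1) by simp
    next
      assume "y = q" then show ?thesis using rq by simp
    next
      assume "E y q" then have "E q y" by (rule sym)
      then show ?thesis using reach_in.step[of A E p q y] rq y(1) by simp
    qed
  qed
  have cA: "c \<in> A"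
  proof (rule ccontr)
    assume nc': "c \<notin> A"
    have "connected_in A E"
    proof (rule connected_from[of p A E])
      show "p \<in> A" by (rule p)
      show "reach_in A E p y" if "y \<in> A" for y using R[of y] that nc' by blast
      show "E y x" if "E x y" for x y using sym that by simp
    qed
    then show False using nc by simp
  qed
  moreover have "\<forall>y\<in>A. \<not> E c y"
  proof (intro ballI notI)
    fix y assume y: "y \<in> A" "E c y"
    have "y \<noteq> c" using y(2) irr by metis
    then have "reach_in A E p y" using R y(1) by simp
    moreover have "E y c" using y(2) by (rule sym)
    ultimately have rc: "reach_in A E p c" using reach_in.step[of A E p y c] cA by simp
    have "connected_in A E"
    proof (rule connected_from[of p A E])
      show "p \<in> A" by (rule p)
      show "reach_in A E p z" if "z \<in> A" for z
      proof (cases "z = c")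
        case True then show ?thesis using rc by simp
      next
        case False then show ?thesis using R that by simp
      qed
      show "E y x" if "E x y" for x y using sym that by simp
    qed
    then show False using nc by simp
  qed
  ultimately show ?thesis by simp
qed

lemma reach_nbr_out:
  assumes "reach_in A E u w" "u = v" "\<And>z. E v z \<Longrightarrow> z \<notin> A"
  shows "w = v"
  using assms(1,2)
proof (induction rule: reach_in.induct)
  case (refl x)
  then show ?case by simp
next
  case (step u' v' w')
  then have "v' = v" by simp
  then have "E v w'" using step.hyps(2) by simp
  then show ?case using assms(3) step.hyps(3) by simp
qed

lemma nbr_sep:
  assumes "v \<in> V"
  shows "separating_set V E {u\<in>V. E v u}"
proof -
  let ?S = "{u\<in>V. E v u}"
  obtain y where y: "y \<in> V" "y \<noteq> v" "\<not> E y v" using nodomv[OF assms] by blast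
  have vS: "v \<in> V - ?S" using assms irr by blast
  have yS: "y \<in> V - ?S" using y sym by blast
  have "\<not> reach_in (V - ?S) E v y"
  proof
    assume "reach_in (V - ?S) E v y"
    then have "y = v" using reach_nbr_out[of "V - ?S" v y v] by blast
    then show False using y by blast
  qed
  then have "\<not> connected_in (V - ?S) E" using vS yS unfolding connected_in_def by blast
  then show ?thesis unfolding separating_set_def using vS by blast
qed

lemma deg2: "v \<in> V \<Longrightarrow> 2 \<le> card {u\<in>V. E v u}"
  using sepcard nbr_sep by blast

end

context mvc
begin

lemma ind_sub: "independent_set V E I \<Longrightarrow> I \<subseteq> V"
  unfolding independent_set_def by simp

lemma ind_noE: "independent_set V E I \<Longrightarrow> u \<in> I \<Longrightarrow> v \<in> I \<Longrightarrow> \<not> E u v"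
  unfolding independent_set_def by blast

lemma card2_other:
  assumes "2 \<le> card S" "s \<in> S"
  shows "\<exists>s'\<in>S. s' \<noteq> s"
proof (rule ccontr)
  assume "\<not> (\<exists>s'\<in>S. s' \<noteq> s)"
  then have "S \<subseteq> {s}" by blast
  then have "card S \<le> card {s}" using card_mono[of "{s}" S] by simp
  then show False using assms(1) by simp
qed

lemma SI_lemma:
  assumes sep: "separating_set V E S" and ind: "independent_set V E I"
    and SI: "S \<subseteq> I" and bI: "b \<in> I" and bS: "b \<notin> S"
  shows False
proof -
  define A where "A = V - S"
  have SV: "S \<subseteq> V" using sep unfolding separating_set_def by simp
  have nc: "\<not> connected_in A E" using sep unfolding separating_set_def A_def by simp
  have AV: "A \<subseteq> V" unfolding A_def by blast
  have IV: "I \<subseteq> V" using ind by (rule ind_sub)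
  have noE: "\<And>u v. u \<in> I \<Longrightarrow> v \<in> I \<Longrightarrow> \<not> E u v" using ind ind_noE by blast
  have bV: "b \<in> V" using bI IV by blast
  have bA: "b \<in> A" using bV bS unfolding A_def by blast
  have c2: "2 \<le> card S" using sepcard[OF sep] .
  have symE: "\<And>x y. E x y \<Longrightarrow> E y x" using sym by blast
  have arrsb: "arr V E s b" if sS: "s \<in> S" for s
  proof -
    obtain s' where s': "s' \<in> S" "s' \<noteq> s" using card2_other[OF c2 sS] by blast
    have sI: "s \<in> I" using sS SI by blast
    have s'I: "s' \<in> I" using s'(1) SI by blast
    have sb: "s \<noteq> b" using sS bS by blast
    have sV: "s \<in> V" using sI IV by blast
    have s'V: "s' \<in> V" using s'I IV by blast
    have s'b: "s' \<noteq> b" using s'(1) bS by blast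
    have "arr V E s b \<or> arr V E b s"
      using AL[OF sV bV sb noE[OF sI bI] s'V s'(2) s'b noE[OF s'I sI] noE[OF s'I bI]] .
    moreover have "\<not> arr V E b s"
    proof
      assume h: "arr V E b s"
      have bs: "b \<noteq> s" using sb by simp
      obtain x where x: "x \<in> V" "E b x" "\<not> E x s" "x \<noteq> s" "x \<notin> I"
        "\<forall>i\<in>I. i \<noteq> s \<longrightarrow> E x i"
        and dom: "\<forall>y\<in>V. y \<noteq> s \<longrightarrow> y = b \<or> E y b \<or> y = x \<or> E y x"
        by (rule wit[OF h ind bI sI bs])
      have xA: "x \<in> A" using x(1) x(5) SI unfolding A_def by blast
      have domA: "\<forall>y\<in>A. y \<noteq> s \<longrightarrow> y = b \<or> E y b \<or> y = x \<or> E y x"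
        using dom AV by blast
      have "s \<in> A \<and> (\<forall>y\<in>A. \<not> E s y)"
        using sing[OF AV nc bA xA _ domA] x(2) by blast
      then show False using sS unfolding A_def by blast
    qed
    ultimately show ?thesis by blast
  qed
  have reachE: "reach_in A E b z" if "reach_in A E b y" "E y z" "z \<in> A" for y z
    using reach_in.step[OF that] .
  have reach1: "reach_in A E b z" if "E b z" "z \<in> A" for z
    using reach_in_edge[of b A z E] bA that by simp
  obtain d0 where d0: "d0 \<in> A" "\<not> reach_in A E b d0"
  proof -
    have "\<not> (\<forall>y\<in>A. reach_in A E b y)"
    proof
      assume "\<forall>y\<in>A. reach_in A E b y"
      then have "connected_in A E" using connected_from[of b A E] bA symE by blast
      then show False using nc by simp
    qed
    then show ?thesis using that by blast
  qed
  show False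
  proof (cases "\<exists>d\<in>A. \<not> reach_in A E b d \<and> (\<exists>s\<in>S. \<not> E s d)")
    case True
    then obtain d s where d: "d \<in> A" "\<not> reach_in A E b d" and sS: "s \<in> S" and nsd: "\<not> E s d"
      by blast
    have dV: "d \<in> V" and dS: "d \<notin> S" using d(1) unfolding A_def by simp_all
    have sV: "s \<in> V" using sS SV by blast
    have sI: "s \<in> I" using sS SI by blast
    have sd: "s \<noteq> d" using sS dS by blast
    have nbd: "\<not> E b d" using reach1 d by blast
    have bd: "b \<noteq> d" using d(2) bA reach_in.refl by metis
    have "(\<forall>y\<in>V. y = s \<or> y = d \<or> E y s \<or> E y d) \<or> arr V E s d \<or> arr V E d s"
      using ec[OF sV dV sd nsd] .
    then show False
    proof (elim disjE)
      assume h: "\<forall>y\<in>V. y = s \<or> y = d \<or> E y s \<or> E y d"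
      have "b = s \<or> b = d \<or> E b s \<or> E b d" using h bV by blast
      then show False using bS sS bd noE[OF bI sI] nbd by blast
    next
      assume "arr V E s d"
      then obtain y where y: "y \<in> V" "E s y" "\<not> E y d" "y \<noteq> d"
        and dom: "\<forall>z\<in>V. z \<noteq> d \<longrightarrow> z = s \<or> E z s \<or> z = y \<or> E z y"
        unfolding arr_def by blast
      have "b = s \<or> E b s \<or> b = y \<or> E b y" using dom bV bd by blast
      moreover have "b \<noteq> y"
      proof
        assume "b = y" then have "E s b" using y(2) by simp
        then show False using noE[OF sI bI] by simp
      qed
      ultimately have Eby: "E b y" using bS sS noE[OF bI sI] by blast
      have yS: "y \<notin> S" using Eby noE bI SI by blast
      have yA: "y \<in> A" using y(1) yS unfolding A_def by blast
      have ry: "reach_in A E b y" using reach1[OF Eby yA] .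
      have allS: "E y s'" if s'S: "s' \<in> S" for s'
      proof (cases "s' = s")
        case True then show ?thesis using y(2) symE by simp
      next
        case False
        have s'V: "s' \<in> V" using s'S SV by blast
        have s'd: "s' \<noteq> d" using s'S dS by blast
        have "s' = s \<or> E s' s \<or> s' = y \<or> E s' y" using dom s'V s'd by blast
        moreover have "\<not> E s' s" using noE s'S sS SI by blast
        moreover have "s' \<noteq> y" using s'S yS by blast
        ultimately show ?thesis using False symE by blast
      qed
      obtain p q where pV: "p \<in> V" and qV: "q \<in> V" and py: "p \<noteq> y" and qy: "q \<noteq> y"
        and pq: "p = q \<or> E p q" and npy: "\<not> E p y" and nqy: "\<not> E q y"
        and domy: "\<forall>z\<in>V. z \<noteq> y \<longrightarrow> z = p \<or> E z p \<or> z = q \<or> E z q"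
        using vc[OF y(1)] by blast
      have pS: "p \<notin> S" using allS npy symE by blast
      have qS: "q \<notin> S" using allS nqy symE by blast
      have pA: "p \<in> A" using pV pS unfolding A_def by blast
      have qA: "q \<in> A" using qV qS unfolding A_def by blast
      have by': "b \<noteq> y" using Eby irr by metis
      have "b = p \<or> E b p \<or> b = q \<or> E b q" using domy bV by' by blast
      moreover have "b \<noteq> p" using npy Eby by blast
      moreover have "b \<noteq> q" using nqy Eby by blast
      ultimately have "E b p \<or> E b q" by blast
      then have rpq: "reach_in A E b p \<and> reach_in A E b q"
      proof
        assume Ebp: "E b p"
        have rp: "reach_in A E b p" using reach1[OF Ebp pA] .
        have "reach_in A E b q"
        proof (cases "p = q")
          case True then show ?thesis using rp by simp
        next
          case False then have "E p q" using pq by simp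
          then show ?thesis using reachE[OF rp _ qA] by simp
        qed
        then show ?thesis using rp by simp
      next
        assume Ebq: "E b q"
        have rq: "reach_in A E b q" using reach1[OF Ebq qA] .
        have "reach_in A E b p"
        proof (cases "p = q")
          case True then show ?thesis using rq by simp
        next
          case False then have "E q p" using pq symE by blast
          then show ?thesis using reachE[OF rq _ pA] by simp
        qed
        then show ?thesis using rq by simp
      qed
      have dy: "d \<noteq> y" using ry d(2) by blast
      have "d = p \<or> E d p \<or> d = q \<or> E d q" using domy dV dy by blast
      then show False
      proof (elim disjE)
        assume "d = p" then show False using rpq d(2) by simp
      next
        assume "E d p" then have "E p d" by (rule symE)
        then show False using reachE[of p d] rpq d by blast
      next
        assume "d = q" then show False using rpq d(2) by simp
      next
        assume "E d q" then have "E q d" by (rule symE)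
        then show False using reachE[of q d] rpq d by blast
      qed
    next
      assume "arr V E d s"
      then obtain y where y: "y \<in> V" "E d y" "\<not> E y s" "y \<noteq> s"
        and dom: "\<forall>z\<in>V. z \<noteq> s \<longrightarrow> z = d \<or> E z d \<or> z = y \<or> E z y"
        unfolding arr_def by blast
      have bs: "b \<noteq> s" using bS sS by blast
      have "b = d \<or> E b d \<or> b = y \<or> E b y" using dom bV bs by blast
      moreover have "b \<noteq> y"
      proof
        assume "b = y" then have "E d b" using y(2) by simp
        then show False using nbd symE by blast
      qed
      ultimately have Eby: "E b y" using bd nbd by blast
      have yS: "y \<notin> S" using Eby noE bI SI by blast
      have yA: "y \<in> A" using y(1) yS unfolding A_def by blast
      have ry: "reach_in A E b y" using reach1[OF Eby yA] .
      have "E y d" using y(2) symE by blast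
      then have "reach_in A E b d" using reachE[OF ry _ d(1)] by simp
      then show False using d(2) by simp
    qed
  next
    case False
    then have allSd: "\<forall>d\<in>A. \<not> reach_in A E b d \<longrightarrow> (\<forall>s\<in>S. E s d)" by blast
    define d where "d = d0"
    have d: "d \<in> A" "\<not> reach_in A E b d" using d0 unfolding d_def by simp_all
    have dV: "d \<in> V" and dS: "d \<notin> S" using d(1) unfolding A_def by simp_all
    have Sd: "\<And>s. s \<in> S \<Longrightarrow> E s d" using allSd d by blast
    have nbd: "\<not> E b d" using reach1 d by blast
    have bd: "b \<noteq> d" using d(2) bA reach_in.refl by metis
    obtain p q where pV: "p \<in> V" and qV: "q \<in> V" and pd: "p \<noteq> d" and qd: "q \<noteq> d"
      and pq: "p = q \<or> E p q" and npd: "\<not> E p d" and nqd: "\<not> E q d"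
      and domd: "\<forall>z\<in>V. z \<noteq> d \<longrightarrow> z = p \<or> E z p \<or> z = q \<or> E z q"
      using vc[OF dV] by blast
    have pS: "p \<notin> S" using Sd npd by blast
    have qS: "q \<notin> S" using Sd nqd by blast
    have pA: "p \<in> A" using pV pS unfolding A_def by blast
    have qA: "q \<in> A" using qV qS unfolding A_def by blast
    have rp_rq: "reach_in A E b p \<longleftrightarrow> reach_in A E b q"
    proof (cases "p = q")
      case True then show ?thesis by simp
    next
      case False then have Epq: "E p q" using pq by simp
      have Eqp: "E q p" using Epq symE by blast
      show ?thesis using reachE[OF _ Epq qA] reachE[OF _ Eqp pA] by blast
    qed
    have "b = p \<or> E b p \<or> b = q \<or> E b q" using domd bV bd by blast
    then have rp: "reach_in A E b p"
    proof (elim disjE)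
      assume "b = p" then show ?thesis using bA reach_in.refl by metis
    next
      assume "E b p" then show ?thesis using reach1 pA by blast
    next
      assume "b = q" then show ?thesis using bA reach_in.refl rp_rq by metis
    next
      assume "E b q" then show ?thesis using reach1 qA rp_rq by blast
    qed
    have rq: "reach_in A E b q" using rp rp_rq by simp
    have Kd: "reach_in A E b y" if yA: "y \<in> A" and yd: "y \<noteq> d" for y
    proof -
      have yV: "y \<in> V" using yA AV by blast
      have "y = p \<or> E y p \<or> y = q \<or> E y q" using domd yV yd by blast
      then show ?thesis
      proof (elim disjE)
        assume "y = p" then show ?thesis using rp by simp
      next
        assume "E y p" then have "E p y" by (rule symE)
        then show ?thesis using reachE[OF rp _ yA] by simp
      next
        assume "y = q" then show ?thesis using rq by simp
      next
        assume "E y q" then have "E q y" by (rule symE)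
        then show ?thesis using reachE[OF rq _ yA] by simp
      qed
    qed
    have Nd: "u \<in> S" if Edu: "E d u" for u
    proof (rule ccontr)
      assume uS: "u \<notin> S"
      have uV: "u \<in> V" using inV[OF Edu] by simp
      have uA: "u \<in> A" using uV uS unfolding A_def by blast
      have ud: "u \<noteq> d" using Edu irr by metis
      have ru: "reach_in A E b u" using Kd[OF uA ud] .
      have "E u d" using Edu symE by blast
      then have "reach_in A E b d" using reachE[OF ru _ d(1)] by simp
      then show False using d(2) by simp
    qed
    have noS: False if sS: "s \<in> S" and H: "\<forall>y\<in>A. y \<noteq> b \<and> y \<noteq> d \<longrightarrow> E s y" for s
    proof -
      have sV: "s \<in> V" using sS SV by blast
      have sI: "s \<in> I" using sS SI by blast
      obtain p' q' where p'V: "p' \<in> V" and q'V: "q' \<in> V" and p's: "p' \<noteq> s" and q's: "q' \<noteq> s"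
        and pq': "p' = q' \<or> E p' q'" and np's: "\<not> E p' s" and nq's: "\<not> E q' s"
        and doms: "\<forall>z\<in>V. z \<noteq> s \<longrightarrow> z = p' \<or> E z p' \<or> z = q' \<or> E z q'"
        using vc[OF sV] by blast
      have claim: False if Ebz: "E b z" and nzs: "\<not> E z s" for z
      proof -
        have zV: "z \<in> V" using inV[OF Ebz] by simp
        have zS: "z \<notin> S" using Ebz noE bI SI by blast
        have zA: "z \<in> A" using zV zS unfolding A_def by blast
        have zb: "z \<noteq> b" using Ebz irr by metis
        have zd: "z \<noteq> d" using Ebz nbd by blast
        have "E s z" using H zA zb zd by blast
        then show False using nzs symE by blast
      qed
      have bs: "b \<noteq> s" using bS sS by blast
      have "b = p' \<or> E b p' \<or> b = q' \<or> E b q'" using doms bV bs by blast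
      then show False
      proof (elim disjE)
        assume bp: "b = p'"
        show False
        proof (cases "q' = p'")
          case True
          have ds: "d \<noteq> s" using dS sS by blast
          have "d = p' \<or> E d p' \<or> d = q' \<or> E d q'" using doms dV ds by blast
          then show False using True bp bd nbd symE by blast
        next
          case False
          then have "E b q'" using pq' bp by simp
          then show False using claim nq's by blast
        qed
      next
        assume "E b p'" then show False using claim np's by blast
      next
        assume bq: "b = q'"
        show False
        proof (cases "q' = p'")
          case True
          have ds: "d \<noteq> s" using dS sS by blast
          have "d = p' \<or> E d p' \<or> d = q' \<or> E d q'" using doms dV ds by blast
          then show False using True bq bd nbd symE by blast
        next
          case False
          then have "E p' b" using pq' bq by simp
          then have "E b p'" using symE by blast
          then show False using claim np's by blast
        qed
      next
        assume "E b q'" then show False using claim nq's by blast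
      qed
    qed
    have "(\<forall>y\<in>V. y = b \<or> y = d \<or> E y b \<or> E y d) \<or> arr V E b d \<or> arr V E d b"
      using ec[OF bV dV bd nbd] .
    then show False
    proof (elim disjE)
      assume D1: "\<forall>y\<in>V. y = b \<or> y = d \<or> E y b \<or> E y d"
      have "S \<noteq> {}" using c2 by auto
      then obtain s where sS: "s \<in> S" by blast
      have sI: "s \<in> I" using sS SI by blast
      have sb: "s \<noteq> b" using sS bS by blast
      obtain x where x: "x \<in> V" "E s x" "\<not> E x b" "x \<noteq> b" "x \<notin> I"
        "\<forall>i\<in>I. i \<noteq> b \<longrightarrow> E x i"
        and dom: "\<forall>y\<in>V. y \<noteq> b \<longrightarrow> y = s \<or> E y s \<or> y = x \<or> E y x"
        by (rule wit[OF arrsb[OF sS] ind sI bI sb])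
      have xS: "x \<notin> S" using x(5) SI by blast
      have xd: "x = d"
      proof (rule ccontr)
        assume xd: "x \<noteq> d"
        have "x = b \<or> x = d \<or> E x b \<or> E x d" using D1 x(1) by blast
        then have "E x d" using x(3) x(4) xd by blast
        then have "x \<in> S" using Nd symE by blast
        then show False using xS by simp
      qed
      have "\<forall>y\<in>A. y \<noteq> b \<and> y \<noteq> d \<longrightarrow> E s y"
      proof (intro ballI impI)
        fix y assume yA: "y \<in> A" and ybd: "y \<noteq> b \<and> y \<noteq> d"
        have yV: "y \<in> V" using yA AV by blast
        have yS: "y \<notin> S" using yA unfolding A_def by blast
        have "y = s \<or> E y s \<or> y = x \<or> E y x" using dom yV ybd by blast
        moreover have "y \<noteq> s" using yS sS by blast
        moreover have "\<not> E y x"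
        proof
          assume "E y x" then have "E d y" using xd symE by blast
          then show False using Nd yS by blast
        qed
        ultimately show "E s y" using xd ybd symE by blast
      qed
      then show False using noS[OF sS] by simp
    next
      assume "arr V E b d"
      then obtain z where z: "z \<in> V" "E b z" "\<not> E z d" "z \<noteq> d"
        and dom: "\<forall>y\<in>V. y \<noteq> d \<longrightarrow> y = b \<or> E y b \<or> y = z \<or> E y z"
        unfolding arr_def by blast
      have zS: "z \<notin> S" using z(2) noE bI SI by blast
      have Sz: "E z s" if sS: "s \<in> S" for s
      proof -
        have sV: "s \<in> V" using sS SV by blast
        have sd: "s \<noteq> d" using sS dS by blast
        have "s = b \<or> E s b \<or> s = z \<or> E s z" using dom sV sd by blast
        moreover have "s \<noteq> b" using sS bS by blast
        moreover have "\<not> E s b" using noE sS bI SI by blast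
        moreover have "s \<noteq> z" using sS zS by blast
        ultimately show ?thesis using symE by blast
      qed
      obtain p q where pV: "p \<in> V" and qV: "q \<in> V" and pz: "p \<noteq> z" and qz: "q \<noteq> z"
        and pq: "p = q \<or> E p q" and npz: "\<not> E p z" and nqz: "\<not> E q z"
        and domz: "\<forall>y\<in>V. y \<noteq> z \<longrightarrow> y = p \<or> E y p \<or> y = q \<or> E y q"
        using vc[OF z(1)] by blast
      have pS: "p \<notin> S" using Sz npz symE by blast
      have qS: "q \<notin> S" using Sz nqz symE by blast
      have dz: "d \<noteq> z" using z(4) by simp
      have "d = p \<or> E d p \<or> d = q \<or> E d q" using domz dV dz by blast
      moreover have "\<not> E d p" using Nd pS by blast
      moreover have "\<not> E d q" using Nd qS by blast
      ultimately have "d = p \<or> d = q" by blast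
      then show False
      proof
        assume dp: "d = p"
        show False
        proof (cases "p = q")
          case True
          have bz: "b \<noteq> z" using z(2) irr by metis
          have "b = p \<or> E b p \<or> b = q \<or> E b q" using domz bV bz by blast
          then show False using True dp bd nbd by blast
        next
          case False
          then have "E d q" using pq dp by simp
          then show False using Nd qS by blast
        qed
      next
        assume dq: "d = q"
        show False
        proof (cases "p = q")
          case True
          have bz: "b \<noteq> z" using z(2) irr by metis
          have "b = p \<or> E b p \<or> b = q \<or> E b q" using domz bV bz by blast
          then show False using True dq bd nbd by blast
        next
          case False
          then have "E p d" using pq dq by simp
          then have "E d p" using symE by blast
          then show False using Nd pS by blast
        qed
      qed
    next
      assume "arr V E d b"
      then obtain y where y: "y \<in> V" "E d y" "\<not> E y b" "y \<noteq> b"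
        and dom: "\<forall>z\<in>V. z \<noteq> b \<longrightarrow> z = d \<or> E z d \<or> z = y \<or> E z y"
        unfolding arr_def by blast
      have yS: "y \<in> S" using Nd y(2) by blast
      have "\<forall>z\<in>A. z \<noteq> b \<and> z \<noteq> d \<longrightarrow> E y z"
      proof (intro ballI impI)
        fix z assume zA: "z \<in> A" and zbd: "z \<noteq> b \<and> z \<noteq> d"
        have zV: "z \<in> V" using zA AV by blast
        have zS: "z \<notin> S" using zA unfolding A_def by blast
        have "z = d \<or> E z d \<or> z = y \<or> E z y" using dom zV zbd by blast
        moreover have "\<not> E z d" using Nd zS symE by blast
        moreover have "z \<noteq> y" using zS yS by blast
        ultimately show "E y z" using zbd symE by blast
      qed
      then show False using noS[OF yS] by simp
    qed
  qed
qed

end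

context mvc
begin

lemma deg_bound:
  assumes vV: "v \<in> V" and ind: "independent_set V E I"
  shows "card I \<le> card {u\<in>V. E v u}"
proof (rule ccontr)
  define Nv where "Nv = {u\<in>V. E v u}"
  assume "\<not> card I \<le> card {u\<in>V. E v u}"
  then have big: "card Nv < card I" unfolding Nv_def by simp
  have IV: "I \<subseteq> V" using ind by (rule ind_sub)
  have noE: "\<And>u w. u \<in> I \<Longrightarrow> w \<in> I \<Longrightarrow> \<not> E u w" using ind ind_noE by blast
  have symE: "\<And>x y. E x y \<Longrightarrow> E y x" using sym by blast
  have fI: "finite I" using IV fin finite_subset by blast
  have NvV: "Nv \<subseteq> V" unfolding Nv_def by blast
  have fN: "finite Nv" using NvV fin finite_subset by blast
  have c2: "2 \<le> card Nv" using deg2[OF vV] unfolding Nv_def .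
  have vNv: "v \<notin> Nv" unfolding Nv_def using irr by blast
  have NvE: "\<And>u. u \<in> Nv \<longleftrightarrow> u \<in> V \<and> E v u" unfolding Nv_def by simp
  show False
  proof (cases "v \<in> I")
    case True
    define W where "W = I - {v}"
    have NvI: "\<And>u. u \<in> Nv \<Longrightarrow> u \<notin> I" using NvE noE True by blast
    have cW: "card W = card I - 1" unfolding W_def using True fI by simp
    have cNW: "card Nv \<le> card W" using cW big by simp
    have fW: "finite W" unfolding W_def using fI by simp
    have WI: "\<And>c. c \<in> W \<Longrightarrow> c \<in> I \<and> c \<noteq> v" unfolding W_def by simp
    have WV: "\<And>c. c \<in> W \<Longrightarrow> c \<in> V" using WI IV by blast
    have WnE: "\<And>c. c \<in> W \<Longrightarrow> \<not> E v c \<and> \<not> E c v" using WI noE True by blast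
    have WNv: "\<And>c. c \<in> W \<Longrightarrow> c \<notin> Nv" using WI NvI by blast
    define H where "H c = {x \<in> Nv. \<not> E x c \<and> (\<forall>i\<in>I. i \<noteq> c \<longrightarrow> E x i)}" for c
    have hit: "H c \<noteq> {}" if h: "arr V E a c" and aI: "a \<in> I" and cW': "c \<in> W" and ac: "a \<noteq> c" for a c
    proof -
      have cI: "c \<in> I" using WI[OF cW'] by simp
      obtain x where x: "x \<in> V" "E a x" "\<not> E x c" "x \<noteq> c" "x \<notin> I"
        "\<forall>i\<in>I. i \<noteq> c \<longrightarrow> E x i"
        and dom: "\<forall>y\<in>V. y \<noteq> c \<longrightarrow> y = a \<or> E y a \<or> y = x \<or> E y x"
        by (rule wit[OF h ind aI cI ac])
      have vc0: "v \<noteq> c" using WI[OF cW'] by metis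
      have "E x v" using x(6) True vc0 by simp
      then have "x \<in> Nv" using NvE x(1) symE by blast
      then have "x \<in> H c" unfolding H_def using x(3) x(6) by blast
      then show ?thesis by blast
    qed
    have disj: "x \<notin> H c'" if "c \<in> W" "c' \<in> W" "c \<noteq> c'" "x \<in> H c" for c c' x
    proof
      assume "x \<in> H c'"
      then have "\<not> E x c'" unfolding H_def by simp
      moreover have "E x c'" using that(4) that(2) not_sym[OF that(3)] WI unfolding H_def by blast
      ultimately show False by simp
    qed
    have ALW: "arr V E c c' \<or> arr V E c' c" if "c \<in> W" "c' \<in> W" "c \<noteq> c'" for c c'
    proof -
      have cI: "c \<in> I" and c'I: "c' \<in> I" using WI that by blast+
      show ?thesis
        using AL[OF WV[OF that(1)] WV[OF that(2)] that(3) noE[OF cI c'I] vV]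
          WI[OF that(1)] WI[OF that(2)] WnE[OF that(1)] WnE[OF that(2)] by blast
    qed
    have Zuniq: "c = c'" if "c \<in> W" "c' \<in> W" "H c = {}" "H c' = {}" for c c'
    proof (rule ccontr)
      assume cc: "c \<noteq> c'"
      have cI: "c \<in> I" and c'I: "c' \<in> I" using WI that by blast+
      have "arr V E c c' \<or> arr V E c' c" using ALW[OF that(1,2) cc] .
      then show False
      proof
        assume "arr V E c c'" then have "H c' \<noteq> {}" using hit cI that(2) cc by blast
        then show False using that(4) by simp
      next
        assume "arr V E c' c" then have "H c \<noteq> {}" using hit c'I that(1) cc by blast
        then show False using that(3) by simp
      qed
    qed
    have cW2: "2 \<le> card W" using c2 cNW by simp
    have nonadj: "\<exists>p\<in>Nv. \<not> E p c" if cW': "c \<in> W" for c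
    proof -
      obtain w where w: "w \<in> W" "w \<noteq> c" using card2_other[OF cW2 cW'] by blast
      obtain p q where pV: "p \<in> V" and qV: "q \<in> V" and pc: "p \<noteq> c" and qc: "q \<noteq> c"
        and pq: "p = q \<or> E p q" and npc: "\<not> E p c" and nqc: "\<not> E q c"
        and domc: "\<forall>y\<in>V. y \<noteq> c \<longrightarrow> y = p \<or> E y p \<or> y = q \<or> E y q"
        using vc[OF WV[OF cW']] by blast
      have vc': "v \<noteq> c" using WI[OF cW'] by metis
      have "v = p \<or> E v p \<or> v = q \<or> E v q" using domc vV vc' by blast
      then show ?thesis
      proof (elim disjE)
        assume vp: "v = p"
        show ?thesis
        proof (cases "p = q")
          case True
          have wV: "w \<in> V" using WV[OF w(1)] .
          have "w = p \<or> E w p \<or> w = q \<or> E w q" using domc wV w(2) by blast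
          then show ?thesis using True vp WI[OF w(1)] WnE[OF w(1)] by blast
        next
          case False
          then have "E v q" using pq vp by simp
          then show ?thesis using NvE qV nqc by blast
        qed
      next
        assume "E v p" then show ?thesis using NvE pV npc by blast
      next
        assume vq: "v = q"
        show ?thesis
        proof (cases "p = q")
          case True
          have wV: "w \<in> V" using WV[OF w(1)] .
          have "w = p \<or> E w p \<or> w = q \<or> E w q" using domc wV w(2) by blast
          then show ?thesis using True vq WI[OF w(1)] WnE[OF w(1)] by blast
        next
          case False
          then have "E p v" using pq vq by simp
          then have "E v p" using symE by blast
          then show ?thesis using NvE pV npc by blast
        qed
      next
        assume "E v q" then show ?thesis using NvE qV nqc by blast
      qed
    qed
    define g where "g c = (if H c \<noteq> {} then (SOME x. x \<in> H c) else (SOME p. p \<in> Nv \<and> \<not> E p c))" for c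
    have gprop: "g c \<in> Nv \<and> \<not> E (g c) c \<and> (H c \<noteq> {} \<longrightarrow> g c \<in> H c)" if cW': "c \<in> W" for c
    proof (cases "H c \<noteq> {}")
      case True
      then have "(SOME x. x \<in> H c) \<in> H c" using some_in_eq by blast
      then have "g c \<in> H c" unfolding g_def using True by simp
      then show ?thesis unfolding H_def by blast
    next
      case False
      have "\<exists>p. p \<in> Nv \<and> \<not> E p c" using nonadj[OF cW'] by blast
      then have "(SOME p. p \<in> Nv \<and> \<not> E p c) \<in> Nv \<and> \<not> E (SOME p. p \<in> Nv \<and> \<not> E p c) c"
        by (rule someI_ex)
      then show ?thesis unfolding g_def using False by simp
    qed
    have ginj: "inj_on g W"
    proof (rule inj_onI)
      fix c c' assume cW': "c \<in> W" and c'W: "c' \<in> W" and gg: "g c = g c'"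
      show "c = c'"
      proof (rule ccontr)
        assume cc: "c \<noteq> c'"
        have c'I: "c' \<in> I" and cI: "c \<in> I" using WI cW' c'W by blast+
        show False
        proof (cases "H c \<noteq> {}")
          case True
          then have "g c \<in> H c" using gprop[OF cW'] by blast
          then have "E (g c) c'" unfolding H_def using c'I not_sym[OF cc] by blast
          then show False using gg gprop[OF c'W] by simp
        next
          case False
          show False
          proof (cases "H c' \<noteq> {}")
            case True
            then have "g c' \<in> H c'" using gprop[OF c'W] by blast
            then have "E (g c') c" unfolding H_def using cI cc by blast
            then show False using gg gprop[OF cW'] by simp
          next
            case False': False
            then show False using Zuniq[OF cW' c'W] False cc by blast
          qed
        qed
      qed
    qed
    have gimg: "g ` W \<subseteq> Nv" using gprop by blast
    have "card W \<le> card Nv" using card_inj_on_le[OF ginj gimg fN] .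
    then have "card (g ` W) = card Nv" using card_image[OF ginj] cNW by simp
    then have gW: "g ` W = Nv" using card_subset_eq[OF fN gimg] by simp
    have gwit: "x = g b" if xNv: "x \<in> Nv" and bW: "b \<in> W" and xI: "\<forall>i\<in>I. i \<noteq> b \<longrightarrow> E x i" for x b
    proof -
      obtain c where cW': "c \<in> W" and xc: "x = g c" using xNv gW by blast
      show ?thesis
      proof (rule ccontr)
        assume "x \<noteq> g b"
        then have cb: "c \<noteq> b" using xc by auto
        have "E x c" using xI WI[OF cW'] cb by blast
        then show False using gprop[OF cW'] xc by simp
      qed
    qed
    have arrE: "E (g a) (g b)" if aW: "a \<in> W" and bW: "b \<in> W" and ab: "a \<noteq> b" and h: "arr V E a b" for a b
    proof -
      have aI: "a \<in> I" and bI: "b \<in> I" using WI aW bW by blast+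
      obtain x where x: "x \<in> V" "E a x" "\<not> E x b" "x \<noteq> b" "x \<notin> I"
        "\<forall>i\<in>I. i \<noteq> b \<longrightarrow> E x i"
        and dom: "\<forall>y\<in>V. y \<noteq> b \<longrightarrow> y = a \<or> E y a \<or> y = x \<or> E y x"
        by (rule wit[OF h ind aI bI ab])
      have vb0: "v \<noteq> b" using WI[OF bW] by metis
      have "E x v" using x(6) True vb0 by simp
      then have xNv: "x \<in> Nv" using NvE x(1) symE by blast
      have xg: "x = g b" using gwit[OF xNv bW x(6)] .
      have gaNv: "g a \<in> Nv" using gprop[OF aW] by blast
      have gaV: "g a \<in> V" using gaNv NvV by blast
      have gab: "g a \<noteq> b" using gaNv WNv[OF bW] by auto
      have "g a = a \<or> E (g a) a \<or> g a = x \<or> E (g a) x" using dom gaV gab by blast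
      moreover have "g a \<noteq> a" using gaNv WNv[OF aW] by auto
      moreover have "\<not> E (g a) a" using gprop[OF aW] by blast
      moreover have "g a \<noteq> x" using xg ginj aW bW ab inj_on_def by metis
      ultimately show ?thesis using xg by blast
    qed
    have clique: "E s s'" if sN: "s \<in> Nv" and s'N: "s' \<in> Nv" and ss: "s \<noteq> s'" for s s'
    proof -
      obtain c where cW': "c \<in> W" and sc: "s = g c" using sN gW by blast
      obtain c' where c'W: "c' \<in> W" and sc': "s' = g c'" using s'N gW by blast
      have cc: "c \<noteq> c'" using ss sc sc' by auto
      have "arr V E c c' \<or> arr V E c' c" using ALW[OF cW' c'W cc] .
      then show ?thesis
      proof
        assume "arr V E c c'" then show ?thesis using arrE[OF cW' c'W cc] sc sc' by simp
      next
        assume "arr V E c' c" then have "E s' s" using arrE[OF c'W cW'] cc sc sc' by simp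
        then show ?thesis using symE by blast
      qed
    qed
    have "Nv \<noteq> {}" using c2 by auto
    then obtain s where sN: "s \<in> Nv" by blast
    have sV: "s \<in> V" using sN NvV by blast
    obtain p q where pV: "p \<in> V" and qV: "q \<in> V" and ps: "p \<noteq> s" and qs: "q \<noteq> s"
      and pq: "p = q \<or> E p q" and nps: "\<not> E p s" and nqs: "\<not> E q s"
      and doms: "\<forall>y\<in>V. y \<noteq> s \<longrightarrow> y = p \<or> E y p \<or> y = q \<or> E y q"
      using vc[OF sV] by blast
    have vs: "v \<noteq> s" using sN vNv by blast
    have Evs: "E v s" using sN NvE by blast
    have "v = p \<or> E v p \<or> v = q \<or> E v q" using doms vV vs by blast
    then show False
    proof (elim disjE)
      assume "v = p" then show False using nps Evs by simp
    next
      assume "E v p" then have "p \<in> Nv" using NvE pV by blast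
      then have "E s p" using clique[OF sN _ ] ps by blast
      then show False using nps symE by blast
    next
      assume "v = q" then show False using nqs Evs by simp
    next
      assume "E v q" then have "q \<in> Nv" using NvE qV by blast
      then have "E s q" using clique[OF sN _ ] qs by blast
      then show False using nqs symE by blast
    qed
  next
    case False
    have vI: "v \<notin> I" using False .
    define U where "U = I \<inter> Nv"
    define W where "W = I - Nv"
    define T where "T = Nv - I"
    have cI: "card I = card U + card W" unfolding U_def W_def using card_Int_Diff[OF fI] by simp
    have cN: "card Nv = card U + card T"
    proof -
      have "card Nv = card (Nv \<inter> I) + card (Nv - I)" using card_Int_Diff[OF fN] by simp
      moreover have "Nv \<inter> I = U" unfolding U_def by blast
      ultimately show ?thesis unfolding T_def by simp
    qed
    have cTW: "card T < card W" using cI cN big by simp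
    have fT: "finite T" unfolding T_def using fN by simp
    have fW: "finite W" unfolding W_def using fI by simp
    have WI: "\<And>c. c \<in> W \<Longrightarrow> c \<in> I \<and> c \<notin> Nv" unfolding W_def by simp
    have WV: "\<And>c. c \<in> W \<Longrightarrow> c \<in> V" using WI IV by blast
    have Wv: "\<And>c. c \<in> W \<Longrightarrow> v \<noteq> c \<and> \<not> E v c \<and> \<not> E c v"
    proof -
      fix c assume cW': "c \<in> W"
      have "c \<in> I" "c \<notin> Nv" "c \<in> V" using WI[OF cW'] WV[OF cW'] by simp_all
      then show "v \<noteq> c \<and> \<not> E v c \<and> \<not> E c v" using vI NvE symE by metis
    qed
    show False
    proof (cases "T = {}")
      case True
      then have NvI: "Nv \<subseteq> I" unfolding T_def by blast
      have "W \<noteq> {}" using cTW by auto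
      then obtain b where bW: "b \<in> W" by blast
      have sepN: "separating_set V E Nv" using nbr_sep[OF vV] unfolding Nv_def .
      show False using SI_lemma[OF sepN ind NvI] WI[OF bW] by blast
    next
      case False
      have TNv: "\<And>t. t \<in> T \<Longrightarrow> t \<in> Nv \<and> t \<notin> I" unfolding T_def by simp
      define H where "H c = {x \<in> T. \<not> E x c \<and> (\<forall>i\<in>I. i \<noteq> c \<longrightarrow> E x i)}" for c
      have witW: "x \<in> H b" if h: "arr V E a b" and aW: "a \<in> W" and bW: "b \<in> W" and ab: "a \<noteq> b"
        and x: "x \<in> V" "E a x" "\<not> E x b" "x \<noteq> b" "x \<notin> I" "\<forall>i\<in>I. i \<noteq> b \<longrightarrow> E x i"
        and dom: "\<forall>y\<in>V. y \<noteq> b \<longrightarrow> y = a \<or> E y a \<or> y = x \<or> E y x" for a b x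
      proof -
        have vb: "v \<noteq> b" using Wv[OF bW] by simp
        have "v = a \<or> E v a \<or> v = x \<or> E v x" using dom vV vb by blast
        moreover have "v \<noteq> a" "\<not> E v a" using Wv[OF aW] by simp_all
        moreover have "v \<noteq> x"
        proof
          assume "v = x" then have "E a v" using x(2) by simp
          then show False using Wv[OF aW] by simp
        qed
        ultimately have "E v x" by blast
        then have "x \<in> T" unfolding T_def using NvE x(1) x(5) by blast
        then show ?thesis unfolding H_def using x(3) x(6) by blast
      qed
      have hit: "H b \<noteq> {}" if h: "arr V E a b" and aW: "a \<in> W" and bW: "b \<in> W" and ab: "a \<noteq> b" for a b
      proof -
        have aI: "a \<in> I" and bI: "b \<in> I" using WI aW bW by blast+
        obtain x where x: "x \<in> V" "E a x" "\<not> E x b" "x \<noteq> b" "x \<notin> I"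
          "\<forall>i\<in>I. i \<noteq> b \<longrightarrow> E x i"
          and dom: "\<forall>y\<in>V. y \<noteq> b \<longrightarrow> y = a \<or> E y a \<or> y = x \<or> E y x"
          by (rule wit[OF h ind aI bI ab])
        have "x \<in> H b" using witW[OF h aW bW ab x dom] .
        then show ?thesis by blast
      qed
      have disj: "x \<notin> H c'" if "c \<in> W" "c' \<in> W" "c \<noteq> c'" "x \<in> H c" for c c' x
      proof
        assume "x \<in> H c'"
        then have "\<not> E x c'" unfolding H_def by simp
        moreover have "E x c'" using that(4) that(2) not_sym[OF that(3)] WI unfolding H_def by blast
        ultimately show False by simp
      qed
      have ALW: "arr V E c c' \<or> arr V E c' c" if "c \<in> W" "c' \<in> W" "c \<noteq> c'" for c c'
      proof -
        have cI: "c \<in> I" and c'I: "c' \<in> I" using WI that by blast+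
        show ?thesis
          using AL[OF WV[OF that(1)] WV[OF that(2)] that(3) noE[OF cI c'I] vV]
            Wv[OF that(1)] Wv[OF that(2)] by blast
      qed
      have Zuniq: "c = c'" if "c \<in> W" "c' \<in> W" "H c = {}" "H c' = {}" for c c'
      proof (rule ccontr)
        assume cc: "c \<noteq> c'"
        have "arr V E c c' \<or> arr V E c' c" using ALW[OF that(1,2) cc] .
        then show False
        proof
          assume "arr V E c c'" then have "H c' \<noteq> {}" using hit that(1,2) cc by blast
          then show False using that(4) by simp
        next
          assume "arr V E c' c" then have "H c \<noteq> {}" using hit that(1,2) cc by blast
          then show False using that(3) by simp
        qed
      qed
      define W' where "W' = {c \<in> W. H c \<noteq> {}}"
      define g where "g c = (SOME x. x \<in> H c)" for c
      have gH: "g c \<in> H c" if "c \<in> W'" for c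
        using that unfolding W'_def g_def using some_in_eq by blast
      have W'W: "W' \<subseteq> W" unfolding W'_def by blast
      have ginj: "inj_on g W'"
      proof (rule inj_onI)
        fix c c' assume cW': "c \<in> W'" and c'W: "c' \<in> W'" and gg: "g c = g c'"
        show "c = c'"
        proof (rule ccontr)
          assume cc: "c \<noteq> c'"
          have "g c \<notin> H c'" using disj[OF _ _ cc gH[OF cW']] W'W cW' c'W by blast
          then show False using gg gH[OF c'W] by simp
        qed
      qed
      have gimg: "g ` W' \<subseteq> T" using gH unfolding H_def by blast
      have cW'T: "card W' \<le> card T" using card_inj_on_le[OF ginj gimg fT] .
      have cWW': "card W \<le> card W' + 1"
      proof -
        have fW': "finite W'" using W'W fW finite_subset by blast
        have "card W = card W' + card (W - W')" using card_Diff_subset[OF fW' W'W] card_mono[OF fW W'W] by simp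
        moreover have "card (W - W') \<le> 1"
        proof (cases "W - W' = {}")
          case True then show ?thesis by (metis card.empty zero_le_one)
        next
          case False
          then obtain c0 where c0: "c0 \<in> W - W'" by blast
          have "W - W' \<subseteq> {c0}"
          proof
            fix c assume c: "c \<in> W - W'"
            have "c = c0" using Zuniq c c0 unfolding W'_def by blast
            then show "c \<in> {c0}" by simp
          qed
          then show ?thesis using card_mono[of "{c0}" "W - W'"] by simp
        qed
        ultimately show ?thesis by simp
      qed
      have "card (g ` W') = card T" using card_image[OF ginj] cW'T cWW' cTW by simp
      then have gW: "g ` W' = T" using card_subset_eq[OF fT gimg] by simp
      have arrE: "E (g a) (g b)" if aW: "a \<in> W'" and bW: "b \<in> W'" and ab: "a \<noteq> b" and h: "arr V E a b" for a b
      proof -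
        have aW0: "a \<in> W" and bW0: "b \<in> W" using W'W aW bW by blast+
        have aI: "a \<in> I" and bI: "b \<in> I" using WI aW0 bW0 by blast+
        obtain x where x: "x \<in> V" "E a x" "\<not> E x b" "x \<noteq> b" "x \<notin> I"
          "\<forall>i\<in>I. i \<noteq> b \<longrightarrow> E x i"
          and dom: "\<forall>y\<in>V. y \<noteq> b \<longrightarrow> y = a \<or> E y a \<or> y = x \<or> E y x"
          by (rule wit[OF h ind aI bI ab])
        have xH: "x \<in> H b" using witW[OF h aW0 bW0 ab x dom] .
        have xT: "x \<in> T" using xH unfolding H_def by blast
        obtain c where cW': "c \<in> W'" and xc: "x = g c" using xT gW by blast
        have cb: "c = b"
        proof (rule ccontr)
          assume "c \<noteq> b"
          then have "x \<notin> H b" using disj[of c b x] W'W cW' bW xc gH[OF cW'] by blast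
          then show False using xH by simp
        qed
        have gaH: "g a \<in> H a" using gH[OF aW] .
        have gaT: "g a \<in> T" using gaH unfolding H_def by blast
        have gaV: "g a \<in> V" using gaT TNv NvV by blast
        have gab: "g a \<noteq> b" using gaT TNv WI[OF bW0] by auto
        have "g a = a \<or> E (g a) a \<or> g a = x \<or> E (g a) x" using dom gaV gab by blast
        moreover have "g a \<noteq> a" using gaT TNv aI by auto
        moreover have "\<not> E (g a) a" using gaH unfolding H_def by blast
        moreover have "g a \<noteq> x" using xc cb ginj aW bW ab inj_on_def by metis
        ultimately show ?thesis using xc cb by blast
      qed
      have clique: "E s s'" if sT: "s \<in> T" and s'T: "s' \<in> T" and ss: "s \<noteq> s'" for s s'
      proof -
        obtain c where cW': "c \<in> W'" and sc: "s = g c" using sT gW by blast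
        obtain c' where c'W: "c' \<in> W'" and sc': "s' = g c'" using s'T gW by blast
        have cc: "c \<noteq> c'" using ss sc sc' by auto
        have "arr V E c c' \<or> arr V E c' c" using ALW W'W cW' c'W cc by blast
        then show ?thesis
        proof
          assume "arr V E c c'" then show ?thesis using arrE[OF cW' c'W cc] sc sc' by simp
        next
          assume "arr V E c' c" then have "E s' s" using arrE[OF c'W cW'] cc sc sc' by simp
          then show ?thesis using symE by blast
        qed
      qed
      obtain t where tT: "t \<in> T" using False by blast
      obtain c where cW': "c \<in> W'" and tc: "t = g c" using tT gW by blast
      have tH: "t \<in> H c" using gH[OF cW'] tc by simp
      have tU: "E t u" if uU: "u \<in> U" for u
      proof -
        have uI: "u \<in> I" and uN: "u \<in> Nv" using uU unfolding U_def by simp_all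
        have "u \<noteq> c" using uN WI W'W cW' by auto
        then show ?thesis using tH uI unfolding H_def by blast
      qed
      have tV: "t \<in> V" using tT TNv NvV by blast
      obtain p q where pV: "p \<in> V" and qV: "q \<in> V" and pt: "p \<noteq> t" and qt: "q \<noteq> t"
        and pq: "p = q \<or> E p q" and npt: "\<not> E p t" and nqt: "\<not> E q t"
        and domt: "\<forall>y\<in>V. y \<noteq> t \<longrightarrow> y = p \<or> E y p \<or> y = q \<or> E y q"
        using vc[OF tV] by blast
      have vt: "v \<noteq> t" using tT TNv vNv by blast
      have Evt: "E v t" using tT TNv NvE by blast
      have bad: False if pN: "p' \<in> Nv" and pt': "p' \<noteq> t" and npt': "\<not> E p' t" for p'
      proof (cases "p' \<in> I")
        case True
        then have "p' \<in> U" unfolding U_def using pN by simp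
        then have "E t p'" using tU by blast
        then show False using npt' symE by blast
      next
        case False
        then have "p' \<in> T" unfolding T_def using pN by simp
        then have "E t p'" using clique[OF tT] pt' by blast
        then show False using npt' symE by blast
      qed
      have "v = p \<or> E v p \<or> v = q \<or> E v q" using domt vV vt by blast
      then show False
      proof (elim disjE)
        assume "v = p" then show False using npt Evt by simp
      next
        assume "E v p" then have "p \<in> Nv" using NvE pV by blast
        then show False using bad pt npt by blast
      next
        assume "v = q" then show False using nqt Evt by simp
      next
        assume "E v q" then have "q \<in> Nv" using NvE qV by blast
        then show False using bad qt nqt by blast
      qed
    qed
  qed
qed

end

context mvc
begin

lemma main_lemma:
  assumes sep: "separating_set V E S" and ind: "independent_set V E I" and big: "card S < card I"
    and nosing: "\<forall>c\<in>V - S. \<exists>c'\<in>V - S. E c c'"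
  shows False
proof -
  define A where "A = V - S"
  have SV: "S \<subseteq> V" using sep unfolding separating_set_def by simp
  have nc: "\<not> connected_in A E" using sep unfolding separating_set_def A_def by simp
  have AV: "A \<subseteq> V" unfolding A_def by blast
  have IV: "I \<subseteq> V" using ind by (rule ind_sub)
  have noE: "\<And>u w. u \<in> I \<Longrightarrow> w \<in> I \<Longrightarrow> \<not> E u w" using ind ind_noE by blast
  have symE: "\<And>x y. E x y \<Longrightarrow> E y x" using sym by blast
  have fI: "finite I" using IV fin finite_subset by blast
  have fS: "finite S" using SV fin finite_subset by blast
  have c2: "2 \<le> card S" using sepcard[OF sep] .
  have nosingA: "\<And>c. c \<in> A \<Longrightarrow> \<exists>c'\<in>A. E c c'" using nosing unfolding A_def by blast
  define J where "J = I - S"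
  define T where "T = S - I"
  have cI: "card I = card (I \<inter> S) + card J" unfolding J_def using card_Int_Diff[OF fI] by simp
  have cS: "card S = card (I \<inter> S) + card T"
  proof -
    have "card S = card (S \<inter> I) + card (S - I)" using card_Int_Diff[OF fS] by simp
    moreover have "S \<inter> I = I \<inter> S" by blast
    ultimately show ?thesis unfolding T_def by simp
  qed
  have cTJ: "card T < card J" using cI cS big by simp
  have fT: "finite T" unfolding T_def using fS by simp
  have fJ: "finite J" unfolding J_def using fI by simp
  have JI: "\<And>c. c \<in> J \<Longrightarrow> c \<in> I \<and> c \<notin> S" unfolding J_def by simp
  have JA: "\<And>c. c \<in> J \<Longrightarrow> c \<in> A" using JI IV unfolding A_def by blast
  have TS: "\<And>t. t \<in> T \<Longrightarrow> t \<in> S \<and> t \<notin> I" unfolding T_def by simp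
  have third: "\<exists>z\<in>I. z \<noteq> a \<and> z \<noteq> b" for a b
  proof (rule ccontr)
    assume "\<not> (\<exists>z\<in>I. z \<noteq> a \<and> z \<noteq> b)"
    then have "I \<subseteq> {a, b}" by blast
    then have "card I \<le> card {a, b}" using card_mono[of "{a, b}" I] by simp
    also have "\<dots> \<le> 2" by (cases "a = b") simp_all
    finally show False using big c2 by simp
  qed
  have ALI: "arr V E a b \<or> arr V E b a" if aI: "a \<in> I" and bI: "b \<in> I" and ab: "a \<noteq> b" for a b
  proof -
    obtain z where z: "z \<in> I" "z \<noteq> a" "z \<noteq> b" using third by blast
    show ?thesis
      using AL[of a b z] aI bI ab z IV noE[OF aI bI] noE[OF z(1) aI] noE[OF z(1) bI] by blast
  qed
  have witS: "x \<in> S" if aJ: "a \<in> J" and xV: "x \<in> V" and Eax: "E a x"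
    and dom: "\<forall>y\<in>V. y \<noteq> b \<longrightarrow> y = a \<or> E y a \<or> y = x \<or> E y x" for a b x
  proof (rule ccontr)
    assume "x \<notin> S"
    then have xA: "x \<in> A" using xV unfolding A_def by blast
    have domA: "\<forall>y\<in>A. y \<noteq> b \<longrightarrow> y = a \<or> E y a \<or> y = x \<or> E y x" using dom AV by blast
    have "b \<in> A \<and> (\<forall>y\<in>A. \<not> E b y)" using sing[OF AV nc JA[OF aJ] xA _ domA] Eax by blast
    then show False using nosingA by blast
  qed
  define H where "H c = {x \<in> T. \<not> E x c \<and> (\<forall>i\<in>I. i \<noteq> c \<longrightarrow> E x i)}" for c
  have witH: "x \<in> H b" if aJ: "a \<in> J" and bI: "b \<in> I" and ab: "a \<noteq> b"
    and x: "x \<in> V" "E a x" "\<not> E x b" "x \<noteq> b" "x \<notin> I" "\<forall>i\<in>I. i \<noteq> b \<longrightarrow> E x i"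
    and dom: "\<forall>y\<in>V. y \<noteq> b \<longrightarrow> y = a \<or> E y a \<or> y = x \<or> E y x" for a b x
  proof -
    have "x \<in> S" using witS[OF aJ x(1) x(2) dom] .
    then have "x \<in> T" unfolding T_def using x(5) by blast
    then show ?thesis unfolding H_def using x(3) x(6) by blast
  qed
  have hit: "H b \<noteq> {}" if h: "arr V E a b" and aJ: "a \<in> J" and bJ: "b \<in> J" and ab: "a \<noteq> b" for a b
  proof -
    have aI: "a \<in> I" and bI: "b \<in> I" using JI aJ bJ by blast+
    obtain x where x: "x \<in> V" "E a x" "\<not> E x b" "x \<noteq> b" "x \<notin> I"
      "\<forall>i\<in>I. i \<noteq> b \<longrightarrow> E x i"
      and dom: "\<forall>y\<in>V. y \<noteq> b \<longrightarrow> y = a \<or> E y a \<or> y = x \<or> E y x"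
      by (rule wit[OF h ind aI bI ab])
    have "x \<in> H b" using witH[OF aJ bI ab x dom] .
    then show ?thesis by blast
  qed
  have disj: "x \<notin> H c'" if "c \<in> J" "c' \<in> J" "c \<noteq> c'" "x \<in> H c" for c c' x
  proof
    assume "x \<in> H c'"
    then have "\<not> E x c'" unfolding H_def by simp
    moreover have "E x c'" using that(4) that(2) not_sym[OF that(3)] JI unfolding H_def by blast
    ultimately show False by simp
  qed
  have Zuniq: "c = c'" if "c \<in> J" "c' \<in> J" "H c = {}" "H c' = {}" for c c'
  proof (rule ccontr)
    assume cc: "c \<noteq> c'"
    have "arr V E c c' \<or> arr V E c' c" using ALI JI that(1,2) cc by blast
    then show False
    proof
      assume "arr V E c c'" then have "H c' \<noteq> {}" using hit that(1,2) cc by blast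
      then show False using that(4) by simp
    next
      assume "arr V E c' c" then have "H c \<noteq> {}" using hit that(1,2) cc by blast
      then show False using that(3) by simp
    qed
  qed
  define W' where "W' = {c \<in> J. H c \<noteq> {}}"
  define g where "g c = (SOME x. x \<in> H c)" for c
  have gH: "g c \<in> H c" if "c \<in> W'" for c
    using that unfolding W'_def g_def using some_in_eq by blast
  have W'J: "W' \<subseteq> J" unfolding W'_def by blast
  have ginj: "inj_on g W'"
  proof (rule inj_onI)
    fix c c' assume cW': "c \<in> W'" and c'W: "c' \<in> W'" and gg: "g c = g c'"
    show "c = c'"
    proof (rule ccontr)
      assume cc: "c \<noteq> c'"
      have "g c \<notin> H c'" using disj[OF _ _ cc gH[OF cW']] W'J cW' c'W by blast
      then show False using gg gH[OF c'W] by simp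
    qed
  qed
  have gimg: "g ` W' \<subseteq> T" using gH unfolding H_def by blast
  have cW'T: "card W' \<le> card T" using card_inj_on_le[OF ginj gimg fT] .
  have fW': "finite W'" using W'J fJ finite_subset by blast
  have cJW: "card J = card W' + card (J - W')" using card_Diff_subset[OF fW' W'J] card_mono[OF fJ W'J] by simp
  have "J - W' \<noteq> {}"
  proof
    assume "J - W' = {}"
    then have "card (J - W') = 0" by (metis card.empty)
    then show False using cJW cW'T cTJ by simp
  qed
  then obtain c0 where c0J: "c0 \<in> J" and c0W: "c0 \<notin> W'" by blast
  have Hc0: "H c0 = {}" using c0J c0W unfolding W'_def by blast
  have W'eq: "c \<in> W'" if "c \<in> J" "c \<noteq> c0" for c
  proof (rule ccontr)
    assume "c \<notin> W'"
    then have "H c = {}" using that(1) unfolding W'_def by blast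
    then show False using Zuniq[OF that(1) c0J _ Hc0] that(2) by blast
  qed
  have cJW1: "card (J - W') \<le> 1"
  proof -
    have "J - W' \<subseteq> {c0}" using W'eq by blast
    then show ?thesis using card_mono[of "{c0}" "J - W'"] by simp
  qed
  have "card (g ` W') = card T" using card_image[OF ginj] cW'T cJW cJW1 cTJ by simp
  then have gW: "g ` W' = T" using card_subset_eq[OF fT gimg] by simp
  have c0I: "c0 \<in> I" and c0S: "c0 \<notin> S" using JI[OF c0J] by simp_all
  have Tc0: "E t c0" if tT: "t \<in> T" for t
  proof -
    obtain c where cW': "c \<in> W'" and tc: "t = g c" using tT gW by blast
    have cc0: "c0 \<noteq> c" using cW' c0W by blast
    have "t \<in> H c" using gH[OF cW'] tc by simp
    then show ?thesis unfolding H_def using c0I cc0 by blast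
  qed
  show False
  proof (cases "T = {}")
    case True
    then have "S \<subseteq> I" unfolding T_def by blast
    then show False using SI_lemma[OF sep ind _ c0I c0S] by blast
  next
    case False
    have Tne: "T \<noteq> {}" using False by simp
    have arrE: "E (g a) (g b)" if aW: "a \<in> W'" and bW: "b \<in> W'" and ab: "a \<noteq> b" and h: "arr V E a b" for a b
    proof -
      have aJ: "a \<in> J" and bJ: "b \<in> J" using W'J aW bW by blast+
      have aI: "a \<in> I" and bI: "b \<in> I" using JI aJ bJ by blast+
      obtain x where x: "x \<in> V" "E a x" "\<not> E x b" "x \<noteq> b" "x \<notin> I"
        "\<forall>i\<in>I. i \<noteq> b \<longrightarrow> E x i"
        and dom: "\<forall>y\<in>V. y \<noteq> b \<longrightarrow> y = a \<or> E y a \<or> y = x \<or> E y x"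
        by (rule wit[OF h ind aI bI ab])
      have xH: "x \<in> H b" using witH[OF aJ bI ab x dom] .
      have xT: "x \<in> T" using xH unfolding H_def by blast
      obtain c where cW': "c \<in> W'" and xc: "x = g c" using xT gW by blast
      have cb: "c = b"
      proof (rule ccontr)
        assume "c \<noteq> b"
        then have "x \<notin> H b" using disj[of c b x] W'J cW' bW xc gH[OF cW'] by blast
        then show False using xH by simp
      qed
      have gaH: "g a \<in> H a" using gH[OF aW] .
      have gaT: "g a \<in> T" using gaH unfolding H_def by blast
      have gaV: "g a \<in> V" using gaT TS SV by blast
      have gab: "g a \<noteq> b" using gaT TS JI[OF bJ] by auto
      have "g a = a \<or> E (g a) a \<or> g a = x \<or> E (g a) x" using dom gaV gab by blast
      moreover have "g a \<noteq> a" using gaT TS aI by auto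
      moreover have "\<not> E (g a) a" using gaH unfolding H_def by blast
      moreover have "g a \<noteq> x" using xc cb ginj aW bW ab inj_on_def by metis
      ultimately show ?thesis using xc cb by blast
    qed
    have clique: "E s s'" if sT: "s \<in> T" and s'T: "s' \<in> T" and ss: "s \<noteq> s'" for s s'
    proof -
      obtain c where cW': "c \<in> W'" and sc: "s = g c" using sT gW by blast
      obtain c' where c'W: "c' \<in> W'" and sc': "s' = g c'" using s'T gW by blast
      have cc: "c \<noteq> c'" using ss sc sc' by auto
      have "arr V E c c' \<or> arr V E c' c" using ALI JI W'J cW' c'W cc by blast
      then show ?thesis
      proof
        assume "arr V E c c'" then show ?thesis using arrE[OF cW' c'W cc] sc sc' by simp
      next
        assume "arr V E c' c" then have "E s' s" using arrE[OF c'W cW'] cc sc sc' by simp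
        then show ?thesis using symE by blast
      qed
    qed
    obtain t where tT: "t \<in> T" using Tne by blast
    have tS: "t \<in> S" using TS[OF tT] by simp
    have tV: "t \<in> V" using tS SV by blast
    obtain p q where pV: "p \<in> V" and qV: "q \<in> V" and pt: "p \<noteq> t" and qt: "q \<noteq> t"
      and pq: "p = q \<or> E p q" and npt: "\<not> E p t" and nqt: "\<not> E q t"
      and domt: "\<forall>y\<in>V. y \<noteq> t \<longrightarrow> y = p \<or> E y p \<or> y = q \<or> E y q"
      using vc[OF tV] by blast
    have key: False if rS: "r \<in> S" and rV: "r \<in> V" and r'V: "r' \<in> V" and rt: "r \<noteq> t" and r't: "r' \<noteq> t"
      and nrt: "\<not> E r t" and nr't: "\<not> E r' t" and rr: "r = r' \<or> E r r'"
      and domr: "\<forall>y\<in>V. y \<noteq> t \<longrightarrow> y = r \<or> E y r \<or> y = r' \<or> E y r'" for r r'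
    proof -
      have rT: "r \<notin> T"
      proof
        assume "r \<in> T" then have "E t r" using clique[OF tT] rt by blast
        then show False using nrt symE by blast
      qed
      have rI: "r \<in> I" using rS rT unfolding T_def by blast
      have c0V: "c0 \<in> V" using c0I IV by blast
      have c0t: "c0 \<noteq> t" using c0S tS by blast
      show False
      proof (cases "r = r'")
        case True
        have "c0 = r \<or> E c0 r \<or> c0 = r' \<or> E c0 r'" using domr c0V c0t by blast
        then show False using True c0S rS noE[OF c0I rI] by auto
      next
        case False
        then have Err': "E r r'" using rr by simp
        have r'I: "r' \<notin> I" using Err' noE rI by blast
        have Jr': "E r' j" if jJ: "j \<in> J" for j
        proof -
          have jI: "j \<in> I" and jS: "j \<notin> S" using JI[OF jJ] by simp_all
          have jV: "j \<in> V" using jI IV by blast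
          have jt: "j \<noteq> t" using jS tS by blast
          have "j = r \<or> E j r \<or> j = r' \<or> E j r'" using domr jV jt by blast
          moreover have "j \<noteq> r" using jS rS by blast
          moreover have "\<not> E j r" using noE[OF jI rI] .
          moreover have "j \<noteq> r'" using jI r'I by blast
          ultimately show ?thesis using symE by blast
        qed
        have r'S: "r' \<notin> S"
        proof
          assume "r' \<in> S" then have "r' \<in> T" unfolding T_def using r'I by blast
          then have "E t r'" using clique[OF tT] r't by blast
          then show False using nr't symE by blast
        qed
        have r'A: "r' \<in> A" using r'V r'S unfolding A_def by blast
        have reach1: "reach_in A E r' z" if "E r' z" "z \<in> A" for z
          using reach_in_edge[of r' A z E] r'A that by simp
        have reachE: "reach_in A E r' z" if "reach_in A E r' y" "E y z" "z \<in> A" for y z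
          using reach_in.step[OF that] .
        obtain d where dA: "d \<in> A" and nrd: "\<not> reach_in A E r' d"
        proof -
          have "\<not> (\<forall>y\<in>A. reach_in A E r' y)"
          proof
            assume "\<forall>y\<in>A. reach_in A E r' y"
            then have "connected_in A E" using connected_from[of r' A E] r'A symE by blast
            then show False using nc by simp
          qed
          then show ?thesis using that by blast
        qed
        have dV: "d \<in> V" using dA AV by blast
        have dS: "d \<notin> S" using dA unfolding A_def by blast
        have rJ: "reach_in A E r' j" if "j \<in> J" for j using reach1[OF Jr'[OF that] JA[OF that]] .
        have dI: "d \<notin> I"
        proof
          assume "d \<in> I" then have "d \<in> J" unfolding J_def using dS by blast
          then show False using rJ nrd by blast
        qed
        have c0A: "c0 \<in> A" using JA[OF c0J] .
        have rc0: "reach_in A E r' c0" using rJ[OF c0J] .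
        have c0d: "c0 \<noteq> d" using rc0 nrd by blast
        have nc0d: "\<not> E c0 d" using reachE[OF rc0 _ dA] nrd by blast
        have cT0: "0 < card T" using Tne fT card_gt_0_iff by blast
        have cJ2: "2 \<le> card J" using cTJ cT0 by linarith
        obtain w where wJ: "w \<in> J" and wc0: "w \<noteq> c0" using card2_other[OF cJ2 c0J] by blast
        have wI: "w \<in> I" and wS: "w \<notin> S" using JI[OF wJ] by simp_all
        have rw: "reach_in A E r' w" using rJ[OF wJ] .
        have wd: "w \<noteq> d" using rw nrd by blast
        have nwd: "\<not> E w d" using reachE[OF rw _ dA] nrd by blast
        have "(\<forall>y\<in>V. y = c0 \<or> y = d \<or> E y c0 \<or> E y d) \<or> arr V E c0 d \<or> arr V E d c0"
          using ec[OF c0V dV c0d nc0d] .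
        then show False
        proof (elim disjE)
          assume D1: "\<forall>y\<in>V. y = c0 \<or> y = d \<or> E y c0 \<or> E y d"
          have wV: "w \<in> V" using wI IV by blast
          have "w = c0 \<or> w = d \<or> E w c0 \<or> E w d" using D1 wV by blast
          then show False using wc0 wd noE[OF wI c0I] nwd by blast
        next
          assume "arr V E c0 d"
          then obtain z where z: "z \<in> V" "E c0 z" "\<not> E z d" "z \<noteq> d"
            and dom: "\<forall>y\<in>V. y \<noteq> d \<longrightarrow> y = c0 \<or> E y c0 \<or> y = z \<or> E y z"
            unfolding arr_def by blast
          have zI: "z \<notin> I" using z(2) noE c0I by blast
          have zall: "E z i" if iI: "i \<in> I" and ic0: "i \<noteq> c0" for i
          proof -
            have iV: "i \<in> V" using iI IV by blast
            have id: "i \<noteq> d" using iI dI by blast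
            have "i = c0 \<or> E i c0 \<or> i = z \<or> E i z" using dom iV id by blast
            moreover have "\<not> E i c0" using noE[OF iI c0I] .
            moreover have "i \<noteq> z" using iI zI by blast
            ultimately show ?thesis using ic0 symE by blast
          qed
          show False
          proof (cases "z \<in> S")
            case True
            then have "z \<in> T" unfolding T_def using zI by blast
            then obtain c where cW': "c \<in> W'" and zc: "z = g c" using gW by blast
            have "z \<in> H c" using gH[OF cW'] zc by simp
            then have nzc: "\<not> E z c" unfolding H_def by blast
            have cI': "c \<in> I" using W'J cW' JI by blast
            have cc0: "c \<noteq> c0" using cW' c0W by blast
            then show False using zall[OF cI' cc0] nzc by simp
          next
            case False
            then have zA: "z \<in> A" using z(1) unfolding A_def by blast
            have domA: "\<forall>y\<in>A. y \<noteq> d \<longrightarrow> y = c0 \<or> E y c0 \<or> y = z \<or> E y z" using dom AV by blast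
            have "d \<in> A \<and> (\<forall>y\<in>A. \<not> E d y)" using sing[OF AV nc c0A zA _ domA] z(2) by blast
            then show False using nosingA by blast
          qed
        next
          assume "arr V E d c0"
          then obtain y where y: "y \<in> V" "E d y" "\<not> E y c0" "y \<noteq> c0"
            and dom: "\<forall>z\<in>V. z \<noteq> c0 \<longrightarrow> z = d \<or> E z d \<or> z = y \<or> E z y"
            unfolding arr_def by blast
          have wV: "w \<in> V" using wI IV by blast
          have "w = d \<or> E w d \<or> w = y \<or> E w y" using dom wV wc0 by blast
          moreover have "w \<noteq> y"
          proof
            assume "w = y" then have "E d w" using y(2) by simp
            then show False using nwd symE by blast
          qed
          ultimately have Ewy: "E w y" using wd nwd by blast
          show False
          proof (cases "y \<in> S")
            case True
            have "y \<notin> I" using Ewy noE wI by blast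
            then have "y \<in> T" unfolding T_def using True by blast
            then show False using Tc0 y(3) by blast
          next
            case False
            then have yA: "y \<in> A" using y(1) unfolding A_def by blast
            have ry: "reach_in A E r' y" using reachE[OF rw Ewy yA] .
            have "E y d" using y(2) symE by blast
            then show False using reachE[OF ry _ dA] nrd by blast
          qed
        qed
      qed
    qed
    have "p \<in> S \<or> q \<in> S"
    proof (rule ccontr)
      assume "\<not> (p \<in> S \<or> q \<in> S)"
      then have pA: "p \<in> A" and qA: "q \<in> A" using pV qV unfolding A_def by blast+
      have domA: "\<forall>y\<in>A. y \<noteq> t \<longrightarrow> y = p \<or> E y p \<or> y = q \<or> E y q" using domt AV by blast
      have "t \<in> A" using sing[OF AV nc pA qA pq domA] by blast
      then show False using tS unfolding A_def by blast
    qed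
    then show False
    proof
      assume "p \<in> S" then show False using key[OF _ pV qV pt qt npt nqt pq domt] by blast
    next
      assume qS: "q \<in> S"
      have qp: "q = p \<or> E q p" using pq symE by blast
      have domt': "\<forall>y\<in>V. y \<noteq> t \<longrightarrow> y = q \<or> E y q \<or> y = p \<or> E y p" using domt by blast
      show False using key[OF qS qV pV qt pt nqt npt qp domt'] .
    qed
  qed
qed

lemma bound:
  assumes sep: "separating_set V E S" and ind: "independent_set V E I"
  shows "card I \<le> card S"
proof (rule ccontr)
  assume "\<not> card I \<le> card S"
  then have big: "card S < card I" by simp
  have SV: "S \<subseteq> V" using sep unfolding separating_set_def by simp
  have fS: "finite S" using SV fin finite_subset by blast
  show False
  proof (cases "\<exists>c\<in>V - S. \<forall>c'\<in>V - S. \<not> E c c'")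
    case True
    then obtain c where cV: "c \<in> V" and cS: "c \<notin> S" and nb: "\<forall>c'\<in>V - S. \<not> E c c'" by blast
    have "{u\<in>V. E c u} \<subseteq> S" using nb by blast
    then have "card {u\<in>V. E c u} \<le> card S" using card_mono[OF fS] by blast
    moreover have "card I \<le> card {u\<in>V. E c u}" using deg_bound[OF cV ind] .
    ultimately show False using big by simp
  next
    case False
    then have "\<forall>c\<in>V - S. \<exists>c'\<in>V - S. E c c'" by blast
    then show False using main_lemma[OF sep ind big] by blast
  qed
qed

end

lemma add_edge_comm: "add_edge E a b = add_edge E b a"
  unfolding add_edge_def by (intro ext) blast

locale pre =
  fixes V :: "'a set" and E :: "'a \<Rightarrow> 'a \<Rightarrow> bool"
  assumes fin: "finite V" and inV: "\<And>u v. E u v \<Longrightarrow> u \<in> V \<and> v \<in> V"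
    and sym: "\<And>u v. E u v \<Longrightarrow> E v u"
    and conn: "connected_in V E"
    and nopair: "\<And>p q. p \<in> V \<Longrightarrow> q \<in> V \<Longrightarrow> p = q \<or> E p q \<Longrightarrow>
        \<forall>y\<in>V. y = p \<or> y = q \<or> E y p \<or> E y q \<Longrightarrow> False"
begin

lemma ec_half:
  assumes aV: "a \<in> V" and bV: "b \<in> V" and ab: "a \<noteq> b" and nab: "\<not> E a b"
    and xV: "x \<in> V" and ax: "a = x \<or> add_edge E a b a x"
    and dom: "\<forall>y\<in>V. y = a \<or> y = x \<or> add_edge E a b y a \<or> add_edge E a b y x"
  shows "(\<forall>y\<in>V. y = a \<or> y = b \<or> E y a \<or> E y b) \<or> arr V E a b"
proof -
  have F: "\<And>u w. add_edge E a b u w \<longleftrightarrow> E u w \<or> (u = a \<and> w = b) \<or> (u = b \<and> w = a)"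
    unfolding add_edge_def by simp
  show ?thesis
  proof (cases "x = b")
    case True
    have "\<forall>y\<in>V. y = a \<or> y = b \<or> E y a \<or> E y b"
    proof
      fix y assume yV: "y \<in> V"
      have "y = a \<or> y = x \<or> add_edge E a b y a \<or> add_edge E a b y x" using dom yV by blast
      then show "y = a \<or> y = b \<or> E y a \<or> E y b" using True F by blast
    qed
    then show ?thesis by simp
  next
    case xb: False
    show ?thesis
    proof (cases "x = a")
      case True
      have dom1: "\<forall>y\<in>V. y = a \<or> E y a \<or> y = b"
      proof
        fix y assume yV: "y \<in> V"
        have "y = a \<or> y = x \<or> add_edge E a b y a \<or> add_edge E a b y x" using dom yV by blast
        then show "y = a \<or> E y a \<or> y = b" using True F ab by blast
      qed
      obtain x' where x': "x' \<in> V" "x' \<noteq> a" "x' \<noteq> b"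
      proof -
        have "\<not> V \<subseteq> {a, b}"
        proof
          assume sub: "V \<subseteq> {a, b}"
          then have Veq: "V = {a, b}" using aV bV by blast
          have "reach_in V E a b" using conn aV bV unfolding connected_in_def by blast
          then have "b = a \<or> E a b \<or> E b a" using reach2[of V E a b a b] Veq by simp
          then show False using ab nab sym by blast
        qed
        then show ?thesis using that by blast
      qed
      have Ex'a: "E x' a" using dom1 x' by blast
      have Eax': "E a x'" using sym[OF Ex'a] .
      have nx'b: "\<not> E x' b"
      proof
        assume Ex'b: "E x' b"
        have "\<forall>y\<in>V. y = a \<or> y = x' \<or> E y a \<or> E y x'"
        proof
          fix y assume yV: "y \<in> V"
          have "y = a \<or> E y a \<or> y = b" using dom1 yV by blast
          then show "y = a \<or> y = x' \<or> E y a \<or> E y x'" using sym[OF Ex'b] by blast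
        qed
        then show False using nopair[OF aV x'(1)] Eax' by blast
      qed
      have "arr V E a b" unfolding arr_def
        using x' Eax' nx'b dom1 by blast
      then show ?thesis by simp
    next
      case xa: False
      have Eax: "E a x" using ax xa xb F by blast
      have dom2: "\<forall>y\<in>V. y \<noteq> b \<longrightarrow> y = a \<or> E y a \<or> y = x \<or> E y x"
      proof (intro ballI impI)
        fix y assume yV: "y \<in> V" and yb: "y \<noteq> b"
        have "y = a \<or> y = x \<or> add_edge E a b y a \<or> add_edge E a b y x" using dom yV by blast
        then show "y = a \<or> E y a \<or> y = x \<or> E y x" using yb xa xb ab F by blast
      qed
      have nxb: "\<not> E x b"
      proof
        assume Exb: "E x b"
        have "\<forall>y\<in>V. y = a \<or> y = x \<or> E y a \<or> E y x"
        proof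
          fix y assume yV: "y \<in> V"
          show "y = a \<or> y = x \<or> E y a \<or> E y x"
          proof (cases "y = b")
            case True then show ?thesis using sym[OF Exb] by simp
          next
            case False then show ?thesis using dom2 yV by blast
          qed
        qed
        then show False using nopair[OF aV xV] Eax by blast
      qed
      have "arr V E a b" unfolding arr_def using xV Eax nxb xb dom2 by blast
      then show ?thesis by simp
    qed
  qed
qed

lemma ec_core:
  assumes aV: "a \<in> V" and bV: "b \<in> V" and ab: "a \<noteq> b" and nab: "\<not> E a b"
    and lt: "gamma_c V (add_edge E a b) < 3"
  shows "(\<forall>y\<in>V. y = a \<or> y = b \<or> E y a \<or> E y b) \<or> arr V E a b \<or> arr V E b a"
proof -
  define F where "F = add_edge E a b"
  have Fd: "\<And>u w. F u w \<longleftrightarrow> E u w \<or> (u = a \<and> w = b) \<or> (u = b \<and> w = a)"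
    unfolding F_def add_edge_def by simp
  have Fsym: "\<And>u w. F u w \<Longrightarrow> F w u" using Fd sym by blast
  have Fba: "F = add_edge E b a" unfolding F_def by (rule add_edge_comm)
  have connF: "connected_in V F"
    using conn unfolding connected_in_def using reach_in_mono[of V E _ _ F] Fd by blast
  have "connected_dominating_set V F V"
    unfolding connected_dominating_set_def using connF by blast
  then obtain D where D: "connected_dominating_set V F D" and cD: "card D = gamma_c V F"
    using gc_ex by blast
  have cD3: "card D < 3" using cD lt unfolding F_def by simp
  obtain p q where Dpq: "D = {p, q}" and pq: "p = q \<or> F p q"
    using cds_pair[OF D fin cD3 Fsym] by blast
  have pV: "p \<in> V" and qV: "q \<in> V" using D Dpq unfolding connected_dominating_set_def by blast+
  have dom: "\<forall>y\<in>V. y = p \<or> y = q \<or> F y p \<or> F y q"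
    using D Dpq unfolding connected_dominating_set_def by blast
  have domF: "\<forall>y\<in>V. y = a \<or> y = x \<or> add_edge E a b y a \<or> add_edge E a b y x"
    if "x \<in> V" "\<forall>y\<in>V. y = a \<or> y = x \<or> F y a \<or> F y x" for x
    using that unfolding F_def by blast
  show ?thesis
  proof (cases "p = a \<or> q = a")
    case True
    then obtain x where xV: "x \<in> V" and ax: "a = x \<or> F a x"
      and dx: "\<forall>y\<in>V. y = a \<or> y = x \<or> F y a \<or> F y x"
    proof
      assume pa: "p = a"
      show ?thesis using that[of q] qV pq dom pa by blast
    next
      assume qa: "q = a"
      have "a = p \<or> F a p" using pq qa Fsym by blast
      then show ?thesis using that[of p] pV dom qa by blast
    qed
    have "(\<forall>y\<in>V. y = a \<or> y = b \<or> E y a \<or> E y b) \<or> arr V E a b"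
      using ec_half[OF aV bV ab nab xV] ax domF[OF xV dx] unfolding F_def by blast
    then show ?thesis by blast
  next
    case nA: False
    show ?thesis
    proof (cases "p = b \<or> q = b")
      case True
      then obtain x where xV: "x \<in> V" and bx: "b = x \<or> F b x"
        and dx: "\<forall>y\<in>V. y = b \<or> y = x \<or> F y b \<or> F y x"
      proof
        assume pb: "p = b"
        show ?thesis using that[of q] qV pq dom pb by blast
      next
        assume qb: "q = b"
        have "b = p \<or> F b p" using pq qb Fsym by blast
        then show ?thesis using that[of p] pV dom qb by blast
      qed
      have nba: "\<not> E b a" using nab sym by blast
      have ba: "b \<noteq> a" using ab by simp
      have bx': "b = x \<or> add_edge E b a b x" using bx Fba by simp
      have dx': "\<forall>y\<in>V. y = b \<or> y = x \<or> add_edge E b a y b \<or> add_edge E b a y x" using dx Fba by simp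
      have "(\<forall>y\<in>V. y = b \<or> y = a \<or> E y b \<or> E y a) \<or> arr V E b a"
        using ec_half[OF bV aV ba nba xV bx' dx'] .
      then show ?thesis by blast
    next
      case nB: False
      have pab: "p \<noteq> a" "p \<noteq> b" "q \<noteq> a" "q \<noteq> b" using nA nB by simp_all
      have Epq: "p = q \<or> E p q" using pq Fd pab by blast
      have "\<forall>y\<in>V. y = p \<or> y = q \<or> E y p \<or> E y q"
      proof
        fix y assume yV: "y \<in> V"
        have "y = p \<or> y = q \<or> F y p \<or> F y q" using dom yV by blast
        then show "y = p \<or> y = q \<or> E y p \<or> E y q" using Fd pab by blast
      qed
      then show ?thesis using nopair[OF pV qV Epq] by blast
    qed
  qed
qed

lemma vc_core:
  assumes uV: "u \<in> V" and connu: "connected_in (V - {u}) E"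
    and lt: "gamma_c (V - {u}) (del_vertex E u) < 3"
  shows "\<exists>p\<in>V. \<exists>q\<in>V. p \<noteq> u \<and> q \<noteq> u \<and> (p = q \<or> E p q) \<and>
        \<not> E p u \<and> \<not> E q u \<and> (\<forall>y\<in>V. y \<noteq> u \<longrightarrow> y = p \<or> E y p \<or> y = q \<or> E y q)"
proof -
  define F where "F = del_vertex E u"
  have Fd: "\<And>x y. F x y \<longleftrightarrow> E x y \<and> x \<noteq> u \<and> y \<noteq> u" unfolding F_def del_vertex_def by simp
  have Fsym: "\<And>x y. F x y \<Longrightarrow> F y x" using Fd sym by blast
  have connF: "connected_in (V - {u}) F"
    using connu unfolding connected_in_def using reach_in_mono[of "V - {u}" E _ _ F] Fd by blast
  have "connected_dominating_set (V - {u}) F (V - {u})"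
    unfolding connected_dominating_set_def using connF by blast
  then obtain D where D: "connected_dominating_set (V - {u}) F D" and cD: "card D = gamma_c (V - {u}) F"
    using gc_ex by blast
  have cD3: "card D < 3" using cD lt unfolding F_def by simp
  have finu: "finite (V - {u})" using fin by simp
  obtain p q where Dpq: "D = {p, q}" and pq: "p = q \<or> F p q"
    using cds_pair[OF D finu cD3 Fsym] by blast
  have pV: "p \<in> V" "p \<noteq> u" and qV: "q \<in> V" "q \<noteq> u"
    using D Dpq unfolding connected_dominating_set_def by blast+
  have dom0: "\<forall>y\<in>V - {u}. y = p \<or> y = q \<or> F y p \<or> F y q"
    using D Dpq unfolding connected_dominating_set_def by blast
  have dom: "\<forall>y\<in>V. y \<noteq> u \<longrightarrow> y = p \<or> E y p \<or> y = q \<or> E y q"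
    using dom0 Fd by blast
  have Epq: "p = q \<or> E p q" using pq Fd by blast
  have npu: "\<not> E p u"
  proof
    assume Epu: "E p u"
    have "\<forall>y\<in>V. y = p \<or> y = q \<or> E y p \<or> E y q"
    proof
      fix y assume yV: "y \<in> V"
      show "y = p \<or> y = q \<or> E y p \<or> E y q"
      proof (cases "y = u")
        case True then show ?thesis using sym[OF Epu] by simp
      next
        case False then show ?thesis using dom yV by blast
      qed
    qed
    then show False using nopair[OF pV(1) qV(1) Epq] by blast
  qed
  have nqu: "\<not> E q u"
  proof
    assume Equ: "E q u"
    have "\<forall>y\<in>V. y = p \<or> y = q \<or> E y p \<or> E y q"
    proof
      fix y assume yV: "y \<in> V"
      show "y = p \<or> y = q \<or> E y p \<or> E y q"
      proof (cases "y = u")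
        case True then show ?thesis using sym[OF Equ] by simp
      next
        case False then show ?thesis using dom yV by blast
      qed
    qed
    then show False using nopair[OF pV(1) qV(1) Epq] by blast
  qed
  show ?thesis using pV qV Epq npu nqu dom by blast
qed

end

theorem theorem4p1:
  fixes V :: "'a set" and E :: "'a \<Rightarrow> 'a \<Rightarrow> bool"
  assumes "simple_graph V E"
    and "connected_in V E"
    and "maximal_vertex_critical 3 V E"
  shows "independence_number V E \<le> connectivity V E"
proof -
  have fin: "finite V" and Vne: "V \<noteq> {}" and inV: "\<And>u v. E u v \<Longrightarrow> u \<in> V \<and> v \<in> V"
    and sym: "\<And>u v. E u v \<Longrightarrow> E v u" and irr: "\<And>v. \<not> E v v"
    using assms(1) unfolding simple_graph_def by blast+
  have conn: "connected_in V E" using assms(2) .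
  have g3: "gamma_c V E = 3"
    and ecrit: "\<forall>u\<in>V. \<forall>v\<in>V. u \<noteq> v \<and> \<not> E u v \<longrightarrow> gamma_c V (add_edge E u v) < 3"
    and conn2: "2 \<le> connectivity V E"
    and vcrit: "\<forall>v\<in>V. gamma_c (V - {v}) (del_vertex E v) < 3"
    using assms(3) unfolding maximal_vertex_critical_def edge_critical_def vertex_critical_def by blast+
  have nopair: False if pV: "p \<in> V" and qV: "q \<in> V" and pq: "p = q \<or> E p q"
    and dom: "\<forall>y\<in>V. y = p \<or> y = q \<or> E y p \<or> E y q" for p q
  proof -
    have pq': "p = q \<or> (E p q \<and> E q p)" using pq sym by blast
    have "connected_in {p, q} E" using pair_connected[OF pV qV pq'] .
    moreover have "{p, q} \<subseteq> V" using pV qV by blast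
    moreover have "\<forall>v\<in>V. v \<in> {p, q} \<or> (\<exists>d\<in>{p, q}. E v d)" using dom by blast
    ultimately have "connected_dominating_set V E {p, q}" unfolding connected_dominating_set_def by blast
    then have "gamma_c V E \<le> card {p, q}" by (rule gc_le)
    moreover have "card {p, q} \<le> 2" by (cases "p = q") simp_all
    ultimately show False using g3 by simp
  qed
  have nodomv: "\<exists>y\<in>V. y \<noteq> d \<and> \<not> E y d" if dV: "d \<in> V" for d
  proof (rule ccontr)
    assume "\<not> (\<exists>y\<in>V. y \<noteq> d \<and> \<not> E y d)"
    then have "\<forall>y\<in>V. y = d \<or> y = d \<or> E y d \<or> E y d" by blast
    then show False using nopair[OF dV dV] by blast
  qed
  have sepcard: "2 \<le> card S" if sep: "separating_set V E S" for S
  proof -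
    have "connectivity V E = (LEAST k. \<exists>S. separating_set V E S \<and> card S = k)"
      unfolding connectivity_def using sep by auto
    then have "connectivity V E \<le> card S" using Least_le[of "\<lambda>k. \<exists>S. separating_set V E S \<and> card S = k" "card S"] sep by auto
    then show ?thesis using conn2 by simp
  qed
  interpret P: pre V E
  proof
    show "finite V" by (rule fin)
    show "\<And>u v. E u v \<Longrightarrow> u \<in> V \<and> v \<in> V" by (rule inV)
    show "\<And>u v. E u v \<Longrightarrow> E v u" by (rule sym)
    show "connected_in V E" by (rule conn)
    show "\<And>p q. p \<in> V \<Longrightarrow> q \<in> V \<Longrightarrow> p = q \<or> E p q \<Longrightarrow>
        \<forall>y\<in>V. y = p \<or> y = q \<or> E y p \<or> E y q \<Longrightarrow> False" using nopair by blast
  qed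
  have ec: "(\<forall>y\<in>V. y = a \<or> y = b \<or> E y a \<or> E y b) \<or> arr V E a b \<or> arr V E b a"
    if ab: "a \<in> V" "b \<in> V" "a \<noteq> b" "\<not> E a b" for a b
  proof -
    have "gamma_c V (add_edge E a b) < 3" using ecrit ab by blast
    then show ?thesis using P.ec_core[OF ab] by blast
  qed
  have vc: "\<exists>p\<in>V. \<exists>q\<in>V. p \<noteq> u \<and> q \<noteq> u \<and> (p = q \<or> E p q) \<and>
        \<not> E p u \<and> \<not> E q u \<and> (\<forall>y\<in>V. y \<noteq> u \<longrightarrow> y = p \<or> E y p \<or> y = q \<or> E y q)"
    if uV: "u \<in> V" for u
  proof -
    have connu: "connected_in (V - {u}) E"
    proof (rule ccontr)
      assume ncu: "\<not> connected_in (V - {u}) E"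
      obtain y where "y \<in> V" "y \<noteq> u" using nodomv[OF uV] by blast
      then have "V - {u} \<noteq> {}" by blast
      then have "separating_set V E {u}" unfolding separating_set_def using uV ncu by blast
      then have "2 \<le> card {u}" by (rule sepcard)
      then show False by simp
    qed
    have "gamma_c (V - {u}) (del_vertex E u) < 3" using vcrit uV by blast
    then show ?thesis using P.vc_core[OF uV connu] by blast
  qed
  interpret M: mvc V E
  proof
    show "finite V" by (rule fin)
    show "\<And>u v. E u v \<Longrightarrow> u \<in> V \<and> v \<in> V" by (rule inV)
    show "\<And>u v. E u v \<Longrightarrow> E v u" by (rule sym)
    show "\<And>v. \<not> E v v" by (rule irr)
    show "\<And>d. d \<in> V \<Longrightarrow> \<exists>y\<in>V. y \<noteq> d \<and> \<not> E y d" by (rule nodomv)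
    show "\<And>a b. a \<in> V \<Longrightarrow> b \<in> V \<Longrightarrow> a \<noteq> b \<Longrightarrow> \<not> E a b \<Longrightarrow>
        (\<forall>y\<in>V. y = a \<or> y = b \<or> E y a \<or> E y b) \<or> arr V E a b \<or> arr V E b a" by (rule ec)
    show "\<And>u. u \<in> V \<Longrightarrow> \<exists>p\<in>V. \<exists>q\<in>V. p \<noteq> u \<and> q \<noteq> u \<and> (p = q \<or> E p q) \<and>
        \<not> E p u \<and> \<not> E q u \<and> (\<forall>y\<in>V. y \<noteq> u \<longrightarrow> y = p \<or> E y p \<or> y = q \<or> E y q)" by (rule vc)
    show "\<And>S. separating_set V E S \<Longrightarrow> 2 \<le> card S" by (rule sepcard)
  qed
  obtain v where vV: "v \<in> V" using Vne by blast
  have exsep: "\<exists>S. separating_set V E S" using M.nbr_sep[OF vV] by blast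
  have cdef: "connectivity V E = (LEAST k. \<exists>S. separating_set V E S \<and> card S = k)"
    unfolding connectivity_def using exsep by simp
  have "\<exists>S. separating_set V E S \<and> card S = (LEAST k. \<exists>S. separating_set V E S \<and> card S = k)"
    using LeastI_ex[of "\<lambda>k. \<exists>S. separating_set V E S \<and> card S = k"] exsep by blast
  then obtain S0 where S0: "separating_set V E S0" and cS0: "card S0 = connectivity V E"
    using cdef by auto
  define X where "X = {card I |I. independent_set V E I}"
  have finX: "finite X"
  proof -
    have "X \<subseteq> card ` Pow V" unfolding X_def independent_set_def by blast
    moreover have "finite (card ` Pow V)" using fin by simp
    ultimately show ?thesis using finite_subset by blast
  qed
  have "independent_set V E {}" unfolding independent_set_def by simp
  then have neX: "X \<noteq> {}" unfolding X_def by blast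
  have "\<forall>x\<in>X. x \<le> card S0" unfolding X_def using M.bound[OF S0] by blast
  then have "Max X \<le> card S0" using Max_le_iff[OF finX neX] by blast
  then show ?thesis unfolding independence_number_def X_def[symmetric] using cS0 by simp
qed

end
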